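(* Let ancillae $A_1,\dots,A_n$ consecutively measure a $d$-dimensional prepared quantum system $Q$. Let $S(Q:A_n)$ be the mutual entropy of $Q$ and $A_n$ in the unamplified state, and let $S(Q:D_n)$ be the mutual entropy of $Q$ and $D_n$ after the measurements have been amplified by detectors $D_1,\dots,D_n$. Then $$S(Q:D_n)\le S(Q:A_n).$$
   Context: $Q$ is $d$-dimensional, initially in $|Q\rangle=\sum_{x_1}\alpha^{(1)}_{x_1}|\widetilde{x}_1\rangle$. Ancilla $A_i$ ($d$-dimensional, basis $\{|x\rangle\}$, initially $|0\rangle$) measures $Q$ in the orthonormal basis $\{|\widetilde{x}_i\rangle\}$ via the unitary $\sum_x|\widetilde{x}_i\rangle\langle\widetilde{x}_i|\otimes U_x$, $U_x|0\rangle=|x\rangle$; with $U^{(i)}_{x_{i-1}x_i}=\langle\widetilde{x}_i|\widetilde{x}_{i-1}\rangle$, the unamplified state after $n$ consecutive measurements is $\sum_{x_1,\dots,x_n}\alpha^{(1)}_{x_1}U^{(2)}_{x_1x_2}\cdots U^{(n)}_{x_{n-1}x_n}|\widetilde{x}_n\rangle_Q|x_1\rangle_{A_1}\cdots|x_n\rangle_{A_n}$. Amplification: each detector $D_i$ (initially $|0\rangle$) copies $A_i$, $|x\rangle_{A_i}|0\rangle_{D_i}\mapsto|x\rangle_{A_i}|x\rangle_{D_i}$. Entropies are von Neumann (log base $d$) of reduced states; $S(X:Y)=S(X)+S(Y)-S(XY)$. *)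

theory Defs
  imports Complex_Main "Jordan_Normal_Form.Char_Poly"
begin

text \<open>A composite system of m subsystems, each d-dimensional. A (pure) state is a function
giving the amplitude of each configuration.\<close>

definition confs :: "nat \<Rightarrow> nat \<Rightarrow> nat list set" where
  "confs d m = {xs. length xs = m \<and> (\<forall>x\<in>set xs. x < d)}"

text \<open>Encoding of a sub-configuration as a matrix index (base-d digits).\<close>
fun enc :: "nat \<Rightarrow> nat list \<Rightarrow> nat" where
  "enc d [] = 0"
| "enc d (x # xs) = x + d * enc d xs"

text \<open>Reduced density matrix on the subsystems listed (distinct, < m) in ks,
obtained from the pure state psi of m d-dimensional subsystems by tracing out all
other subsystems.\<close>
definition reduced_dm ::
  "nat \<Rightarrow> nat \<Rightarrow> (nat list \<Rightarrow> complex) \<Rightarrow> nat list \<Rightarrow> complex mat" where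
  "reduced_dm d m psi ks =
     mat (d ^ length ks) (d ^ length ks)
       (\<lambda>(i, j). \<Sum>xs\<in>confs d m. \<Sum>ys\<in>confs d m.
          if enc d (map (nth xs) ks) = i \<and> enc d (map (nth ys) ks) = j \<and>
             (\<forall>l<m. l \<notin> set ks \<longrightarrow> xs ! l = ys ! l)
          then psi xs * cnj (psi ys) else 0)"

text \<open>Von Neumann entropy with logarithm base d: -\<Sum> \<lambda> log_d \<lambda> over the eigenvalues
(roots of the characteristic polynomial, counted with multiplicity), 0 log 0 = 0.\<close>
definition entr :: "real \<Rightarrow> real \<Rightarrow> real" where
  "entr b t = (if t \<le> 0 then 0 else - t * log b t)"

definition vn_entropy :: "nat \<Rightarrow> complex mat \<Rightarrow> real" where
  "vn_entropy d r =
     (\<Sum>z\<in>{z. poly (char_poly r) z = 0}.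
        real (order z (char_poly r)) * entr (real d) (Re z))"

definition mutual_entropy ::
  "nat \<Rightarrow> nat \<Rightarrow> (nat list \<Rightarrow> complex) \<Rightarrow> nat list \<Rightarrow> nat list \<Rightarrow> real" where
  "mutual_entropy d m psi X Y =
     vn_entropy d (reduced_dm d m psi X) + vn_entropy d (reduced_dm d m psi Y)
     - vn_entropy d (reduced_dm d m psi (X @ Y))"

text \<open>Setting: b i x is the vector |x~_i> (components b i x q, q < d) of the i-th
measurement basis; alpha are the coefficients of the initial state of Q in basis 1.
U i x y = <y~_i | x~_{i-1}>.\<close>
definition Umat :: "nat \<Rightarrow> (nat \<Rightarrow> nat \<Rightarrow> nat \<Rightarrow> complex) \<Rightarrow> nat \<Rightarrow> nat \<Rightarrow> nat \<Rightarrow> complex" where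
  "Umat d b i x y = (\<Sum>q<d. cnj (b i y q) * b (i - 1) x q)"

text \<open>Unamplified state after n measurements: subsystem 0 is Q (computational basis),
subsystem i (1 \<le> i \<le> n) is ancilla A_i. Configuration q # xs with xs = [x_1,...,x_n].\<close>
definition unamp_state ::
  "nat \<Rightarrow> nat \<Rightarrow> (nat \<Rightarrow> complex) \<Rightarrow> (nat \<Rightarrow> nat \<Rightarrow> nat \<Rightarrow> complex) \<Rightarrow> nat list \<Rightarrow> complex" where
  "unamp_state d n alpha b c =
     (case c of [] \<Rightarrow> 0
      | q # xs \<Rightarrow> alpha (xs ! 0) *
          (\<Prod>i\<in>{2..n}. Umat d b i (xs ! (i - 2)) (xs ! (i - 1))) * b n (xs ! (n - 1)) q)"

text \<open>Amplified state: subsystems 0 = Q, 1..n = A_1..A_n, n+1..2n = D_1..D_n, where each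
detector D_i (initially |0>) has copied A_i.\<close>
definition amp_state ::
  "nat \<Rightarrow> nat \<Rightarrow> (nat \<Rightarrow> complex) \<Rightarrow> (nat \<Rightarrow> nat \<Rightarrow> nat \<Rightarrow> complex) \<Rightarrow> nat list \<Rightarrow> complex" where
  "amp_state d n alpha b c =
     (if drop (n + 1) c = take n (drop 1 c)
      then unamp_state d n alpha b (take (n + 1) c) else 0)"

end

theory Submission
  imports Defs "Jordan_Normal_Form.Schur_Decomposition"
begin


definition adj :: "complex mat \<Rightarrow> complex mat" where
  "adj M = mat (dim_col M) (dim_row M) (\<lambda>(i,j). cnj (M $$ (j,i)))"

definition unitary :: "nat \<Rightarrow> complex mat \<Rightarrow> bool" where
  "unitary n U \<longleftrightarrow> U \<in> carrier_mat n n \<and> adj U * U = 1\<^sub>m n \<and> U * adj U = 1\<^sub>m n"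

lemma adj_carrier[simp]: "M \<in> carrier_mat a b \<Longrightarrow> adj M \<in> carrier_mat b a"
  by (auto simp: adj_def)

lemma adj_dims[simp]: "dim_row (adj M) = dim_col M" "dim_col (adj M) = dim_row M"
  by (auto simp: adj_def)

lemma adj_index[simp]: "i < dim_col M \<Longrightarrow> j < dim_row M \<Longrightarrow> adj M $$ (i,j) = cnj (M $$ (j,i))"
  by (auto simp: adj_def)

lemma mult_entry: "A \<in> carrier_mat n k \<Longrightarrow> B \<in> carrier_mat k m \<Longrightarrow> i < n \<Longrightarrow> j < m \<Longrightarrow>
  (A * B) $$ (i,j) = (\<Sum>l<k. A $$ (i,l) * B $$ (l,j))"
  by (auto simp: index_mult_mat scalar_prod_def atLeast0LessThan)

lemma adj_adj[simp]: "adj (adj M) = M"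
  by (rule eq_matI, auto)

lemma adj_mult: assumes A: "A \<in> carrier_mat n k" and B: "B \<in> carrier_mat k m"
  shows "adj (A * B) = adj B * adj A"
proof (rule eq_matI)
  fix i j assume i: "i < dim_row (adj B * adj A)" and j: "j < dim_col (adj B * adj A)"
  hence i: "i < m" and j: "j < n" using A B by auto
  have "adj (A * B) $$ (i,j) = cnj ((A*B) $$ (j,i))" using A B i j by simp
  also have "\<dots> = (\<Sum>l<k. cnj (A $$ (j,l)) * cnj (B $$ (l,i)))"
    using A B i j by (simp add: mult_entry[OF A B] cnj_sum del: index_mult_mat)
  also have "\<dots> = (adj B * adj A) $$ (i,j)"
    using A B i j by (simp add: mult_entry[of "adj B" m k "adj A" n] mult.commute del: index_mult_mat)
  finally show "adj (A * B) $$ (i,j) = (adj B * adj A) $$ (i,j)" .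
qed (use A B in auto)

lemma adj_one[simp]: "adj (1\<^sub>m n) = 1\<^sub>m n"
  by (rule eq_matI, auto)

lemma unitary_mult: assumes "unitary n U" "unitary n W" shows "unitary n (U * W)"
proof -
  have U: "U \<in> carrier_mat n n" and W: "W \<in> carrier_mat n n" using assms unitary_def by auto
  have aU: "adj U \<in> carrier_mat n n" and aW: "adj W \<in> carrier_mat n n" using U W by auto
  have "adj (U*W) * (U*W) = (adj W * adj U) * (U * W)" using U W by (simp add: adj_mult)
  also have "\<dots> = adj W * (adj U * (U * W))" using assoc_mult_mat[OF aW aU mult_carrier_mat[OF U W]] by auto
  also have "adj U * (U * W) = (adj U * U) * W" using assoc_mult_mat[OF aU U W] by auto
  also have "\<dots> = W" using assms W unfolding unitary_def by auto
  finally have 1: "adj (U*W) * (U*W) = 1\<^sub>m n" using assms unfolding unitary_def by auto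
  have "(U*W) * adj (U*W) = (U * W) * (adj W * adj U)" using U W by (simp add: adj_mult)
  also have "\<dots> = U * (W * (adj W * adj U))" using assoc_mult_mat[OF U W mult_carrier_mat[OF aW aU]] by auto
  also have "W * (adj W * adj U) = (W * adj W) * adj U" using assoc_mult_mat[OF W aW aU] by auto
  also have "\<dots> = adj U" using assms aU unfolding unitary_def by auto
  finally show ?thesis using 1 U W assms unfolding unitary_def by auto
qed

lemma cscalar_expand: "v \<in> carrier_vec n \<Longrightarrow> w \<in> carrier_vec n \<Longrightarrow>
   v \<bullet>c w = (\<Sum>k<n. v $ k * cnj (w $ k))"
  by (auto simp: scalar_prod_def atLeast0LessThan)

lemma self_cscalar: "v \<in> carrier_vec n \<Longrightarrow> v \<bullet>c v = complex_of_real (\<Sum>k<n. (cmod (v $ k))\<^sup>2)"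
  unfolding cscalar_expand[of v n v] of_real_sum
  by (rule sum.cong, auto, metis complex_norm_square of_real_power)

lemma unit_completion:
  fixes v :: "complex vec"
  assumes v: "v \<in> carrier_vec n" and v0: "v \<noteq> 0\<^sub>v n"
  shows "\<exists>W c. unitary n W \<and> c \<noteq> 0 \<and> (\<forall>i<n. W $$ (i,0) = c * v $ i)"
proof -
  interpret cof_vec_space n "TYPE(complex)" .
  define b where "b = basis_completion v"
  define ws where "ws = gram_schmidt n b"
  from basis_completion[OF v v0, folded b_def]
  have dist_b: "distinct b" and indep: "\<not> lin_dep (set b)" and b: "set b \<subseteq> carrier_vec n"
    and hdb: "hd b = v" and len_b: "length b = n" by auto
  from v0 v have n: "n \<noteq> 0" by auto
  from hdb len_b n obtain vs where bv: "b = v # vs" by (cases b, auto)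
  from gram_schmidt_result[OF b dist_b indep refl, folded ws_def]
  have ws: "set ws \<subseteq> carrier_vec n" "corthogonal ws" "length ws = n"
    by (auto simp: len_b)
  from gram_schmidt_hd[OF v, of vs, folded bv] have hdws: "hd ws = v" unfolding ws_def .
  have ws0: "ws ! 0 = v" using hdws ws(3) n by (cases ws, auto)
  have wsc: "\<And>j. j < n \<Longrightarrow> ws ! j \<in> carrier_vec n" using ws by auto
  define r where "r j = sqrt (\<Sum>k<n. (cmod (ws ! j $ k))\<^sup>2)" for j
  have rr: "complex_of_real (r j) * complex_of_real (r j) = ws ! j \<bullet>c ws ! j" if j: "j < n" for j
  proof -
    have "(r j)^2 = (\<Sum>k<n. (cmod (ws ! j $ k))\<^sup>2)" unfolding r_def
      by (rule real_sqrt_pow2, rule sum_nonneg, auto)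
    hence "r j * r j = (\<Sum>k<n. (cmod (ws ! j $ k))\<^sup>2)" by (simp add: power2_eq_square)
    thus ?thesis unfolding self_cscalar[OF wsc[OF j]] of_real_mult[symmetric] by simp
  qed
  have rn0: "r j \<noteq> 0" if j: "j < n" for j
  proof
    assume "r j = 0"
    hence "ws ! j \<bullet>c ws ! j = 0" using rr[OF j] by simp
    with corthogonalD[OF ws(2), of j j] ws(3) j show False by auto
  qed
  define W where "W = mat n n (\<lambda>(i,j). ws ! j $ i / complex_of_real (r j))"
  have Wc: "W \<in> carrier_mat n n" unfolding W_def by auto
  have WW: "adj W * W = 1\<^sub>m n"
  proof (rule eq_matI)
    fix i j assume i: "i < dim_row (1\<^sub>m n)" and j: "j < dim_col (1\<^sub>m n)"
    hence i: "i < n" and j: "j < n" by auto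
    have e1: "(adj W * W) $$ (i,j) = (\<Sum>k<n. cnj (ws ! i $ k) * ws ! j $ k) / (complex_of_real (r i) * complex_of_real (r j))"
      using i j Wc by (simp add: mult_entry[of _ n n _ n] W_def sum_divide_distrib del: index_mult_mat)
    have e2: "(\<Sum>k<n. cnj (ws ! i $ k) * ws ! j $ k) = ws ! j \<bullet>c ws ! i"
      using cscalar_expand[OF wsc[OF j] wsc[OF i]] by (simp add: mult.commute)
    show "(adj W * W) $$ (i,j) = 1\<^sub>m n $$ (i,j)"
    proof (cases "i = j")
      case True
      then show ?thesis using e1 e2 rr[OF i] rn0[OF i] i by (metis (no_types, lifting) divide_self_if index_one_mat(1) mult_eq_0_iff of_real_eq_0_iff)
    next
      case False
      then show ?thesis using e1 e2 corthogonalD[OF ws(2), of j i] ws(3) i j by simp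
    qed
  qed (use Wc in auto)
  have WW2: "W * adj W = 1\<^sub>m n" using mat_mult_left_right_inverse[OF _ Wc WW] Wc by auto
  have "unitary n W" unfolding unitary_def using Wc WW WW2 by auto
  moreover have "\<forall>i<n. W $$ (i,0) = (1 / complex_of_real (r 0)) * v $ i"
    using n ws0 unfolding W_def by auto
  moreover have "1 / complex_of_real (r 0) \<noteq> 0" using rn0[of 0] n by auto
  ultimately show ?thesis by blast
qed



definition ext1 :: "complex \<Rightarrow> complex mat \<Rightarrow> complex mat" where
  "ext1 a X = mat (Suc (dim_row X)) (Suc (dim_col X))
     (\<lambda>(i,j). if i = 0 \<and> j = 0 then a else if i = 0 \<or> j = 0 then 0 else X $$ (i-1, j-1))"

lemma ext1_carrier[simp]: "X \<in> carrier_mat m k \<Longrightarrow> ext1 a X \<in> carrier_mat (Suc m) (Suc k)"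
  by (auto simp: ext1_def)

lemma ext1_dims[simp]: "dim_row (ext1 a X) = Suc (dim_row X)" "dim_col (ext1 a X) = Suc (dim_col X)"
  by (auto simp: ext1_def)

lemma ext1_index: "i < Suc (dim_row X) \<Longrightarrow> j < Suc (dim_col X) \<Longrightarrow>
   ext1 a X $$ (i,j) = (if i = 0 \<and> j = 0 then a else if i = 0 \<or> j = 0 then 0 else X $$ (i-1, j-1))"
  by (auto simp: ext1_def)

lemma ext1_00[simp]: "ext1 a X $$ (0,0) = a" by (simp add: ext1_def)
lemma ext1_0S[simp]: "j < dim_col X \<Longrightarrow> ext1 a X $$ (0, Suc j) = 0" by (simp add: ext1_def)
lemma ext1_S0[simp]: "i < dim_row X \<Longrightarrow> ext1 a X $$ (Suc i, 0) = 0" by (simp add: ext1_def)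
lemma ext1_SS[simp]: "i < dim_row X \<Longrightarrow> j < dim_col X \<Longrightarrow> ext1 a X $$ (Suc i, Suc j) = X $$ (i,j)"
  by (simp add: ext1_def)

lemma ext1_mult: assumes X: "X \<in> carrier_mat m k" and Y: "Y \<in> carrier_mat k l"
  shows "ext1 a X * ext1 b Y = ext1 (a*b) (X*Y)"
proof (rule eq_matI)
  fix i j assume i: "i < dim_row (ext1 (a*b) (X*Y))" and j: "j < dim_col (ext1 (a*b) (X*Y))"
  hence i: "i < Suc m" and j: "j < Suc l" using X Y by auto
  have dX: "dim_row X = m" "dim_col X = k" and dY: "dim_row Y = k" "dim_col Y = l" using X Y by auto
  have "(ext1 a X * ext1 b Y) $$ (i,j) = (\<Sum>p<Suc k. ext1 a X $$ (i,p) * ext1 b Y $$ (p,j))"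
    using i j X Y by (intro mult_entry, auto)
  also have "\<dots> = ext1 a X $$ (i,0) * ext1 b Y $$ (0,j) + (\<Sum>p<k. ext1 a X $$ (i,Suc p) * ext1 b Y $$ (Suc p,j))"
    by (rule sum.lessThan_Suc_shift)
  also have "\<dots> = ext1 (a*b) (X*Y) $$ (i,j)"
  proof (cases i)
    case 0
    then show ?thesis using j by (cases j, auto simp: dX dY)
  next
    case (Suc i')
    then have i': "i' < m" using i by simp
    show ?thesis
    proof (cases j)
      case 0
      then show ?thesis using Suc i' by (simp add: dX dY)
    next
      case (Suc j')
      then have j': "j' < l" using j by simp
      have "(X * Y) $$ (i', j') = (\<Sum>p<k. X $$ (i',p) * Y $$ (p,j'))" by (rule mult_entry[OF X Y i' j'])
      moreover have "ext1 (a*b) (X*Y) $$ (Suc i', Suc j') = (X*Y) $$ (i',j')"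
        by (rule ext1_SS) (use i' j' dX dY in auto)
      ultimately show ?thesis using \<open>i = Suc i'\<close> Suc i' j' by (simp add: dX dY del: index_mult_mat)
    qed
  qed
  finally show "(ext1 a X * ext1 b Y) $$ (i,j) = ext1 (a*b) (X*Y) $$ (i,j)" .
qed (use X Y in auto)

lemma adj_ext1: "adj (ext1 a X) = ext1 (cnj a) (adj X)"
  by (rule eq_matI, auto simp: ext1_index)

lemma ext1_one: "ext1 1 (1\<^sub>m m) = 1\<^sub>m (Suc m)"
  by (rule eq_matI, auto simp: ext1_index)

lemma assoc3: "A \<in> carrier_mat n n \<Longrightarrow> B \<in> carrier_mat n n \<Longrightarrow> C \<in> carrier_mat n n \<Longrightarrow>
  A * B * C = A * (B * C)"
  by (rule assoc_mult_mat)

lemma spectral: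
  "A \<in> carrier_mat n n \<Longrightarrow> adj A = A \<Longrightarrow>
   \<exists>U D. unitary n U \<and> D \<in> carrier_mat n n \<and> diagonal_mat D \<and> A = U * D * adj U"
proof (induction n arbitrary: A)
  case 0
  show ?case
  proof -
    have A0: "A \<in> carrier_mat 0 0" using 0 by simp
    have "A = 1\<^sub>m 0 * A * adj (1\<^sub>m 0)" using A0 by (simp add: adj_one)
    moreover have "unitary 0 (1\<^sub>m 0)" unfolding unitary_def by (simp add: adj_one)
    moreover have "diagonal_mat A" using A0 unfolding diagonal_mat_def by auto
    ultimately show ?thesis using A0 by blast
  qed
next
  case (Suc m)
  define n where "n = Suc m"
  have A: "A \<in> carrier_mat n n" using Suc n_def by auto
  obtain as where cp: "char_poly A = (\<Prod>a\<leftarrow>as. [:- a, 1:])" and las: "length as = n"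
    using char_poly_factorized[OF A] by auto
  then obtain e as' where as: "as = e # as'" unfolding n_def by (cases as, auto)
  have "poly (char_poly A) e = 0" unfolding cp as by simp
  hence ev: "eigenvalue A e" using eigenvalue_root_char_poly[OF A] by auto
  define v where "v = find_eigenvector A e"
  from find_eigenvector[OF A ev] have "eigenvector A v e" unfolding v_def .
  hence v: "v \<in> carrier_vec n" and v0: "v \<noteq> 0\<^sub>v n" and Av: "A *\<^sub>v v = e \<cdot>\<^sub>v v"
    unfolding eigenvector_def using A by auto
  obtain W c where uW: "unitary n W" and c0: "c \<noteq> 0" and Wv: "\<forall>i<n. W $$ (i,0) = c * v $ i"
    using unit_completion[OF v v0] by auto
  have W: "W \<in> carrier_mat n n" and WW: "adj W * W = 1\<^sub>m n" and WW2: "W * adj W = 1\<^sub>m n"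
    using uW unfolding unitary_def by auto
  have aW: "adj W \<in> carrier_mat n n" using W by auto
  define A' where "A' = adj W * A * W"
  have A'c: "A' \<in> carrier_mat n n" using A W unfolding A'_def by auto
  have AW0: "(A * W) $$ (k,0) = e * W $$ (k,0)" if k: "k < n" for k
  proof -
    have "(A * W) $$ (k,0) = (\<Sum>l<n. A $$ (k,l) * W $$ (l,0))"
      using k A W by (intro mult_entry, auto simp: n_def)
    also have "\<dots> = c * (\<Sum>l<n. A $$ (k,l) * v $ l)"
      unfolding sum_distrib_left by (rule sum.cong, auto simp: Wv)
    also have "(\<Sum>l<n. A $$ (k,l) * v $ l) = (A *\<^sub>v v) $ k"
      using k A v by (auto simp: scalar_prod_def atLeast0LessThan)
    also have "\<dots> = e * v $ k" using Av k v by simp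
    finally show ?thesis using Wv k by simp
  qed
  have col0: "A' $$ (i,0) = (if i = 0 then e else 0)" if i: "i < n" for i
  proof -
    have "A' = adj W * (A * W)" unfolding A'_def using assoc3[OF aW A W] .
    hence "A' $$ (i,0) = (\<Sum>k<n. adj W $$ (i,k) * (A * W) $$ (k,0))"
      using i A W by (simp add: mult_entry[of _ n n _ n] n_def del: index_mult_mat)
    also have "\<dots> = e * (\<Sum>k<n. adj W $$ (i,k) * W $$ (k,0))"
      using AW0 by (simp add: sum_distrib_left mult.commute mult.left_commute)
    also have "(\<Sum>k<n. adj W $$ (i,k) * W $$ (k,0)) = (adj W * W) $$ (i,0)"
      using i W by (simp add: mult_entry[of _ n n _ n] n_def del: index_mult_mat)
    also have "\<dots> = (if i = 0 then 1 else 0)" using WW i by (simp add: n_def)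
    finally show ?thesis by simp
  qed
  have hA': "adj A' = A'"
  proof -
    have c1: "adj W * A \<in> carrier_mat n n" using aW A by simp
    have "adj (adj W * A * W) = adj W * adj (adj W * A)"
      using adj_mult[OF c1 W] by simp
    also have "adj (adj W * A) = adj A * W" using adj_mult[OF aW A] by simp
    finally show ?thesis unfolding A'_def using Suc.prems(2) assoc3[OF aW A W] by simp
  qed
  have row0: "A' $$ (0,j) = (if j = 0 then cnj e else 0)" if j: "j < n" for j
  proof -
    have "A' $$ (0,j) = adj A' $$ (0,j)" using hA' by simp
    also have "\<dots> = cnj (A' $$ (j,0))" using A'c j by (simp add: n_def)
    finally show ?thesis using col0[OF j] by simp
  qed
  define e' where "e' = A' $$ (0,0)"
  define A3 where "A3 = mat m m (\<lambda>(i,j). A' $$ (Suc i, Suc j))"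
  have A3c: "A3 \<in> carrier_mat m m" unfolding A3_def by auto
  have hA3: "adj A3 = A3"
  proof (rule eq_matI)
    fix i j assume "i < dim_row A3" "j < dim_col A3"
    hence i: "i < m" and j: "j < m" using A3c by auto
    have "adj A3 $$ (i,j) = cnj (A' $$ (Suc j, Suc i))" using i j unfolding A3_def by simp
    also have "\<dots> = adj A' $$ (Suc i, Suc j)" using i j A'c by (simp add: n_def)
    also have "\<dots> = A3 $$ (i,j)" using hA' i j unfolding A3_def by simp
    finally show "adj A3 $$ (i,j) = A3 $$ (i,j)" .
  qed (auto simp: A3_def)
  have A'ext: "A' = ext1 e' A3"
  proof (rule eq_matI)
    fix i j assume "i < dim_row (ext1 e' A3)" "j < dim_col (ext1 e' A3)"
    hence i: "i < n" and j: "j < n" using A3c by (auto simp: n_def)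
    show "A' $$ (i,j) = ext1 e' A3 $$ (i,j)"
    proof (cases i)
      case 0
      then show ?thesis using j row0 A3c unfolding e'_def by (cases j, auto simp: n_def)
    next
      case (Suc i')
      then show ?thesis using i j col0 A3c by (cases j, auto simp: n_def A3_def)
    qed
  qed (use A'c A3c in \<open>auto simp: n_def\<close>)
  obtain U3 D3 where uU3: "unitary m U3" and D3: "D3 \<in> carrier_mat m m" and dD3: "diagonal_mat D3"
    and A3eq: "A3 = U3 * D3 * adj U3"
    using Suc.IH[OF A3c hA3] by auto
  have U3: "U3 \<in> carrier_mat m m" using uU3 unitary_def by auto
  define E where "E = ext1 1 U3"
  have Ec: "E \<in> carrier_mat n n" unfolding E_def using U3 by (simp add: n_def)
  have uE: "unitary n E"
  proof -
    have aU3: "adj U3 \<in> carrier_mat m m" using U3 by simp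
    have "adj E * E = ext1 (cnj 1 * 1) (adj U3 * U3)" unfolding E_def adj_ext1
      by (rule ext1_mult[OF aU3 U3])
    hence "adj E * E = 1\<^sub>m n" using uU3 unfolding unitary_def n_def by (simp add: ext1_one)
    moreover have "E * adj E = ext1 (1 * cnj 1) (U3 * adj U3)" unfolding E_def adj_ext1
      by (rule ext1_mult[OF U3 aU3])
    hence "E * adj E = 1\<^sub>m n" using uU3 unfolding unitary_def n_def by (simp add: ext1_one)
    ultimately show ?thesis using Ec unfolding unitary_def by auto
  qed
  define D where "D = ext1 e' D3"
  have Dc: "D \<in> carrier_mat n n" unfolding D_def using D3 by (simp add: n_def)
  have dD: "diagonal_mat D" unfolding diagonal_mat_def
  proof (intro allI impI)
    fix i j assume i: "i < dim_row D" and j: "j < dim_col D" and ij: "i \<noteq> j"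
    show "D $$ (i,j) = 0"
    proof (cases i)
      case 0
      then show ?thesis using j ij D3 unfolding D_def by (cases j, auto)
    next
      case (Suc i')
      then show ?thesis using i j ij D3 dD3 unfolding D_def diagonal_mat_def by (cases j, auto)
    qed
  qed
  have EDE: "E * D * adj E = A'"
  proof -
    have "E * D = ext1 (1 * e') (U3 * D3)" unfolding E_def D_def by (rule ext1_mult[OF U3 D3])
    hence "E * D * adj E = ext1 (1 * e') (U3 * D3) * ext1 (cnj 1) (adj U3)" unfolding E_def adj_ext1 by simp
    also have "\<dots> = ext1 (1 * e' * cnj 1) (U3 * D3 * adj U3)"
      by (rule ext1_mult[OF mult_carrier_mat[OF U3 D3] adj_carrier[OF U3]])
    finally show ?thesis unfolding A'ext A3eq by simp
  qed
  have c2: "adj W * A \<in> carrier_mat n n" using aW A by simp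
  have c3: "A' * adj W \<in> carrier_mat n n" using A'c aW by simp
  have "W * A' * adj W = W * (A' * adj W)" using assoc3[OF W A'c aW] .
  also have "A' * adj W = (adj W * A) * (W * adj W)" unfolding A'_def using assoc3[OF c2 W aW] .
  also have "\<dots> = adj W * A" using WW2 right_mult_one_mat[OF c2] by simp
  also have "W * (adj W * A) = (W * adj W) * A" using assoc3[OF W aW A] by simp
  also have "\<dots> = A" using WW2 A by simp
  finally have AA': "A = W * A' * adj W" by simp
  have c4: "E * D \<in> carrier_mat n n" using Ec Dc by simp
  have aE: "adj E \<in> carrier_mat n n" using Ec by simp
  have c5: "W * E \<in> carrier_mat n n" using Ec W by simp
  have "(W * E) * D * adj (W * E) = (W * E) * D * (adj E * adj W)" using adj_mult[OF W Ec] by simp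
  also have "\<dots> = W * (E * D) * (adj E * adj W)" using assoc3[OF W Ec Dc] by simp
  also have "\<dots> = W * (E * D) * adj E * adj W" using assoc3[OF mult_carrier_mat[OF W c4] aE aW] by simp
  also have "W * (E * D) * adj E = W * (E * D * adj E)" using assoc3[OF W c4 aE] by simp
  finally have "(W * E) * D * adj (W * E) = W * A' * adj W" using EDE by simp
  hence "A = (W * E) * D * adj (W * E)" using AA' by simp
  moreover have "unitary n (W * E)" by (rule unitary_mult[OF uW uE])
  ultimately show ?case using Dc dD unfolding n_def by blast
qed



definition phi :: "real \<Rightarrow> real" where "phi t = (if t \<le> 0 then 0 else t * ln t)"

lemma entr_phi: "entr b t = - phi t / ln b"
  by (simp add: entr_def phi_def log_def)

lemma phi_term:
  assumes p: "p > 0" and l: "l \<ge> 0"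
  shows "phi l \<ge> l * ln p + (l - p)"
proof (cases "l = 0")
  case True then show ?thesis using p by (simp add: phi_def)
next
  case False
  hence l0: "l > 0" using l by simp
  have "ln (p / l) \<le> p / l - 1" using ln_le_minus_one[of "p/l"] p l0 by simp
  hence "ln p - ln l \<le> p / l - 1" using ln_div[of p l] p l0 by simp
  hence "l * (ln p - ln l) \<le> l * (p / l - 1)" using l0 by (intro mult_left_mono) auto
  hence "l * ln p - l * ln l \<le> p - l" using l0 by (simp add: algebra_simps)
  then show ?thesis using l0 by (simp add: phi_def)
qed

lemma jensen_ds:
  fixes w :: "nat \<Rightarrow> nat \<Rightarrow> real" and l p :: "nat \<Rightarrow> real"
  assumes w0: "\<And>i j. i < n \<Longrightarrow> j < n \<Longrightarrow> w i j \<ge> 0"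
    and row: "\<And>i. i < n \<Longrightarrow> (\<Sum>j<n. w i j) = 1"
    and col: "\<And>j. j < n \<Longrightarrow> (\<Sum>i<n. w i j) = 1"
    and l0: "\<And>j. j < n \<Longrightarrow> l j \<ge> 0"
    and p: "\<And>i. i < n \<Longrightarrow> p i = (\<Sum>j<n. w i j * l j)"
  shows "(\<Sum>i<n. phi (p i)) \<le> (\<Sum>j<n. phi (l j))"
proof -
  have each: "phi (p i) \<le> (\<Sum>j<n. w i j * phi (l j))" if i: "i < n" for i
  proof (cases "p i > 0")
    case True
    have tm: "w i j * (l j * ln (p i) + (l j - p i)) \<le> w i j * phi (l j)" if j: "j \<in> {..<n}" for j
      using phi_term[OF True l0[of j]] w0[OF i, of j] j by (intro mult_left_mono) auto
    have "(\<Sum>j<n. w i j * phi (l j)) \<ge> (\<Sum>j<n. w i j * (l j * ln (p i) + (l j - p i)))"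
      by (rule sum_mono, rule tm)
    also have "(\<Sum>j<n. w i j * (l j * ln (p i) + (l j - p i))) =
       (\<Sum>j<n. (w i j * l j) * ln (p i) + (w i j * l j - p i * w i j))"
      by (rule sum.cong, auto simp: algebra_simps)
    also have "\<dots> = (\<Sum>j<n. w i j * l j) * ln (p i) + ((\<Sum>j<n. w i j * l j) - p i * (\<Sum>j<n. w i j))"
      unfolding sum.distrib sum_subtractf sum_distrib_left sum_distrib_right ..
    also have "\<dots> = p i * ln (p i)" using p[OF i] row[OF i] by simp
    also have "\<dots> = phi (p i)" using True by (simp add: phi_def)
    finally show ?thesis .
  next
    case False
    have nn: "\<And>j. j \<in> {..<n} \<Longrightarrow> w i j * l j \<ge> 0" using w0 l0 i by auto
    have "p i \<ge> 0" unfolding p[OF i] by (rule sum_nonneg, rule nn)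
    hence pi0: "p i = 0" using False by simp
    hence "(\<Sum>j<n. w i j * l j) = 0" using p[OF i] by simp
    hence z: "\<forall>j\<in>{..<n}. w i j * l j = 0"
      using sum_nonneg_eq_0_iff[of "{..<n}" "\<lambda>j. w i j * l j"] nn by simp
    have "(\<Sum>j<n. w i j * phi (l j)) = 0"
    proof (rule sum.neutral, rule ballI)
      fix j assume j: "j \<in> {..<n}"
      from z j show "w i j * phi (l j) = 0" by (auto simp: phi_def)
    qed
    then show ?thesis using pi0 by (simp add: phi_def)
  qed
  have "(\<Sum>i<n. phi (p i)) \<le> (\<Sum>i<n. \<Sum>j<n. w i j * phi (l j))"
    by (rule sum_mono, rule each, simp)
  also have "\<dots> = (\<Sum>j<n. (\<Sum>i<n. w i j) * phi (l j))"
    unfolding sum_distrib_right by (rule sum.swap)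
  also have "\<dots> = (\<Sum>j<n. phi (l j))" using col by simp
  finally show ?thesis .
qed

lemma prod_linear_nz: "(\<Prod>a\<leftarrow>es. [:- a, 1:]) \<noteq> (0 :: complex poly)"
proof -
  have "monic (\<Prod>a\<leftarrow>es. [:- a, 1:] :: complex poly)" by (rule monic_prod_list, auto)
  thus ?thesis by auto
qed

lemma order_prod_linear:
  "Polynomial.order z (\<Prod>a\<leftarrow>es. [:- a, 1:]) = count_list es (z :: complex)"
proof (induction es)
  case Nil
  then show ?case by (simp add: order_0I)
next
  case (Cons a es)
  have "Polynomial.order z ([:- a, 1:] * (\<Prod>a\<leftarrow>es. [:- a, 1:])) =
        Polynomial.order z [:- a, 1:] + Polynomial.order z (\<Prod>a\<leftarrow>es. [:- a, 1:])"
    by (rule order_mult, use prod_linear_nz[of "a#es"] in simp)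
  then show ?case using Cons by (simp add: order_linear')
qed

lemma sum_list_count_real:
  "sum_list (map (f :: 'a \<Rightarrow> real) xs) = (\<Sum>x\<in>set xs. real (count_list xs x) * f x)"
proof (induction xs)
  case (Cons x xs)
  show ?case
  proof (cases "x \<in> set xs")
    case True
    have "(\<Sum>y\<in>set (x # xs). real (count_list (x # xs) y) * f y) =
          (\<Sum>y\<in>set xs. real (count_list xs y) * f y + (if y = x then f x else 0))"
      using True by (intro sum.cong) (auto simp: algebra_simps insert_absorb)
    also have "\<dots> = (\<Sum>y\<in>set xs. real (count_list xs y) * f y) + f x"
      using True by (simp add: sum.distrib)
    finally show ?thesis using Cons.IH by simp
  next
    case False
    hence "\<And>y. y \<in> set xs \<Longrightarrow> x \<noteq> y" by blast
    thus ?thesis using False by (simp add: Cons.IH)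
  qed
qed simp

lemma roots_prod_linear: "{z. poly (\<Prod>a\<leftarrow>es. [:- a, 1:]) z = 0} = set (es :: complex list)"
  by (auto simp: poly_prod_list_zero_iff)

lemma vn_entropy_list:
  assumes "char_poly A = (\<Prod>a\<leftarrow>es. [:- a, 1:])"
  shows "vn_entropy d A = (\<Sum>a\<leftarrow>es. entr (real d) (Re a))"
  unfolding vn_entropy_def assms roots_prod_linear order_prod_linear
  by (simp add: sum_list_count_real)

lemma vn_entropy_diag:
  assumes D: "D \<in> carrier_mat n n" and dD: "diagonal_mat D"
  shows "vn_entropy d D = (\<Sum>i<n. entr (real d) (Re (D $$ (i,i))))"
proof -
  have "upper_triangular D" using dD D unfolding diagonal_mat_def upper_triangular_def by auto
  from char_poly_upper_triangular[OF D this]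
  have "vn_entropy d D = (\<Sum>a\<leftarrow>diag_mat D. entr (real d) (Re a))" by (rule vn_entropy_list)
  also have "\<dots> = (\<Sum>i<n. entr (real d) (Re (D $$ (i,i))))"
    using D unfolding diag_mat_def
    by (simp add: interv_sum_list_conv_sum_set_nat atLeast0LessThan comp_def)
  finally show ?thesis .
qed

lemma vn_entropy_unitary_sim:
  assumes U: "unitary n U" and B: "B \<in> carrier_mat n n" and A: "A = U * B * adj U"
  shows "vn_entropy d A = vn_entropy d B"
proof -
  have Uc: "U \<in> carrier_mat n n" using U unitary_def by auto
  have "similar_mat_wit A B U (adj U)"
    by (rule similar_mat_witI[of _ _ n], insert U Uc B A, auto simp: unitary_def)
  hence "char_poly A = char_poly B" by (intro char_poly_similar, auto simp: similar_mat_def)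
  thus ?thesis unfolding vn_entropy_def by simp
qed



lemma gram_diag:
  assumes N: "N \<in> carrier_mat n k" and j: "j < n"
  shows "(N * adj N) $$ (j,j) = complex_of_real (\<Sum>l<k. (cmod (N $$ (j,l)))\<^sup>2)"
proof -
  have "(N * adj N) $$ (j,j) = (\<Sum>l<k. N $$ (j,l) * adj N $$ (l,j))"
    by (rule mult_entry[OF N adj_carrier[OF N] j j])
  also have "\<dots> = (\<Sum>l<k. complex_of_real ((cmod (N $$ (j,l)))\<^sup>2))"
    using N j by (intro sum.cong, auto, metis complex_norm_square of_real_power)
  finally show ?thesis by (simp add: of_real_sum)
qed

lemma UDU_entry:
  assumes U: "U \<in> carrier_mat n n" and D: "D \<in> carrier_mat n n" and dD: "diagonal_mat D" and i: "i < n"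
  shows "(U * D * adj U) $$ (i,i) = (\<Sum>k<n. complex_of_real ((cmod (U $$ (i,k)))\<^sup>2) * D $$ (k,k))"
proof -
  have UD: "(U * D) $$ (i,k) = U $$ (i,k) * D $$ (k,k)" if k: "k < n" for k
  proof -
    have "(U * D) $$ (i,k) = (\<Sum>j<n. U $$ (i,j) * D $$ (j,k))" by (rule mult_entry[OF U D i k])
    also have "\<dots> = (\<Sum>j<n. if j = k then U $$ (i,k) * D $$ (k,k) else 0)"
      using dD D k unfolding diagonal_mat_def by (intro sum.cong, auto)
    also have "\<dots> = U $$ (i,k) * D $$ (k,k)" using k by simp
    finally show ?thesis .
  qed
  have "(U * D * adj U) $$ (i,i) = (\<Sum>k<n. (U * D) $$ (i,k) * adj U $$ (k,i))"
    by (rule mult_entry[OF mult_carrier_mat[OF U D] adj_carrier[OF U] i i])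
  also have "\<dots> = (\<Sum>k<n. complex_of_real ((cmod (U $$ (i,k)))\<^sup>2) * D $$ (k,k))"
  proof (rule sum.cong)
    fix k assume "k \<in> {..<n}"
    hence k: "k < n" by simp
    have "(U * D) $$ (i,k) * adj U $$ (k,i) = (U $$ (i,k) * cnj (U $$ (i,k))) * D $$ (k,k)"
      using UD[OF k] U i k by simp
    also have "U $$ (i,k) * cnj (U $$ (i,k)) = complex_of_real ((cmod (U $$ (i,k)))\<^sup>2)"
      by (metis complex_norm_square of_real_power)
    finally show "(U * D) $$ (i,k) * adj U $$ (k,i) = complex_of_real ((cmod (U $$ (i,k)))\<^sup>2) * D $$ (k,k)" .
  qed simp
  finally show ?thesis .
qed

lemma dephase:
  assumes A: "A \<in> carrier_mat n n" and M: "M \<in> carrier_mat n k" and AM: "A = M * adj M"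
    and B: "B \<in> carrier_mat n n" and dB: "diagonal_mat B" and BA: "\<forall>i<n. B $$ (i,i) = A $$ (i,i)"
    and d: "d \<ge> 2"
  shows "vn_entropy d A \<le> vn_entropy d B"
proof -
  have aM: "adj M \<in> carrier_mat k n" using M by simp
  have hA: "adj A = A" unfolding AM using adj_mult[OF M aM] by simp
  obtain U D where uU: "unitary n U" and D: "D \<in> carrier_mat n n" and dD: "diagonal_mat D"
    and AU: "A = U * D * adj U"
    using spectral[OF A hA] by auto
  have U: "U \<in> carrier_mat n n" and UU: "adj U * U = 1\<^sub>m n" and UU2: "U * adj U = 1\<^sub>m n"
    using uU unitary_def by auto
  have aU: "adj U \<in> carrier_mat n n" using U by simp
  define N where "N = adj U * M"
  have Nc: "N \<in> carrier_mat n k" unfolding N_def using aU M by simp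
  have DN: "D = N * adj N"
  proof -
    have c1: "adj U * U * D \<in> carrier_mat n n" by (rule mult_carrier_mat[OF mult_carrier_mat[OF aU U] D])
    have "N * adj N = adj U * M * (adj M * U)" unfolding N_def using adj_mult[OF aU M] by simp
    also have "\<dots> = adj U * (M * (adj M * U))" using assoc_mult_mat[OF aU M mult_carrier_mat[OF aM U]] .
    also have "M * (adj M * U) = A * U" unfolding AM using assoc_mult_mat[OF M aM U] by simp
    also have "adj U * (A * U) = adj U * A * U" using assoc_mult_mat[OF aU A U] by simp
    also have "adj U * A = adj U * U * D * adj U" unfolding AU
      using assoc_mult_mat[OF aU U D] assoc_mult_mat[OF aU mult_carrier_mat[OF U D] aU]
      by simp
    also have "\<dots> * U = adj U * U * D * (adj U * U)" using assoc_mult_mat[OF c1 aU U] by simp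
    also have "\<dots> = D" using UU D by simp
    finally show ?thesis by simp
  qed
  define l where "l j = Re (D $$ (j,j))" for j
  define w where "w i j = (cmod (U $$ (i,j)))\<^sup>2" for i j
  define p where "p i = Re (A $$ (i,i))" for i
  have l0: "l j \<ge> 0" if "j < n" for j
    unfolding l_def DN gram_diag[OF Nc that] by (simp add: sum_nonneg)
  have pA: "p i = (\<Sum>j<n. w i j * l j)" if i: "i < n" for i
    unfolding p_def AU UDU_entry[OF U D dD i] w_def l_def Re_sum by simp
  have row: "(\<Sum>j<n. w i j) = 1" if i: "i < n" for i
  proof -
    have "complex_of_real (\<Sum>j<n. w i j) = (U * adj U) $$ (i,i)"
      unfolding w_def gram_diag[OF U i] ..
    also have "\<dots> = 1" using UU2 i by simp
    finally show ?thesis by (metis of_real_eq_1_iff)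
  qed
  have col: "(\<Sum>i<n. w i j) = 1" if j: "j < n" for j
  proof -
    have "(adj U * U) $$ (j,j) = (adj U * adj (adj U)) $$ (j,j)" by simp
    also have "\<dots> = complex_of_real (\<Sum>i<n. (cmod (adj U $$ (j,i)))\<^sup>2)" by (rule gram_diag[OF aU j])
    also have "(\<Sum>i<n. (cmod (adj U $$ (j,i)))\<^sup>2) = (\<Sum>i<n. w i j)"
      unfolding w_def using U j by (intro sum.cong, auto)
    finally have "complex_of_real (\<Sum>i<n. w i j) = 1" using UU j by simp
    thus ?thesis by (metis of_real_eq_1_iff)
  qed
  have J: "(\<Sum>i<n. phi (p i)) \<le> (\<Sum>j<n. phi (l j))"
    by (rule jensen_ds[of n w l p], auto simp: l0 pA, auto simp: w_def intro: row[unfolded w_def] col[unfolded w_def])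
  have "vn_entropy d A = vn_entropy d D" by (rule vn_entropy_unitary_sim[OF uU D AU])
  also have "\<dots> = (\<Sum>j<n. entr (real d) (l j))" unfolding vn_entropy_diag[OF D dD] l_def ..
  also have "\<dots> = - (\<Sum>j<n. phi (l j)) / ln (real d)"
    unfolding entr_phi by (simp add: sum_divide_distrib sum_negf)
  also have "\<dots> \<le> - (\<Sum>i<n. phi (p i)) / ln (real d)"
  proof -
    have "ln (real d) > 0" using d by simp
    thus ?thesis using J by (simp add: divide_right_mono)
  qed
  also have "\<dots> = (\<Sum>i<n. entr (real d) (p i))"
    unfolding entr_phi by (simp add: sum_divide_distrib sum_negf)
  also have "\<dots> = vn_entropy d B"
    unfolding vn_entropy_diag[OF B dB] p_def using BA by simp
  finally show ?thesis .
qed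



lemma confs_eq: "confs d m = {xs. set xs \<subseteq> {..<d} \<and> length xs = m}"
  unfolding confs_def by auto

lemma finite_confs[simp]: "finite (confs d m)"
  unfolding confs_eq by (rule finite_lists_length_eq, simp)

lemma confs_Suc_img: "confs d (Suc m) = (\<lambda>(q,us). q # us) ` ({..<d} \<times> confs d m)"
proof
  show "confs d (Suc m) \<subseteq> (\<lambda>(q,us). q # us) ` ({..<d} \<times> confs d m)"
  proof
    fix xs assume xs: "xs \<in> confs d (Suc m)"
    then obtain q us where "xs = q # us" unfolding confs_def by (cases xs, auto)
    thus "xs \<in> (\<lambda>(q,us). q # us) ` ({..<d} \<times> confs d m)" using xs unfolding confs_def by force
  qed
qed (auto simp: confs_def)

lemma sum_confs_Suc: "(\<Sum>c\<in>confs d (Suc m). f c) = (\<Sum>q<d. \<Sum>us\<in>confs d m. f (q # us))"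
proof -
  have inj: "inj_on (\<lambda>(q,us). q # us) ({..<d} \<times> confs d m)" by (auto simp: inj_on_def)
  have "(\<Sum>c\<in>confs d (Suc m). f c) = (\<Sum>x\<in>{..<d} \<times> confs d m. f (case x of (q,us) \<Rightarrow> q # us))"
    unfolding confs_Suc_img by (subst sum.reindex[OF inj], simp add: comp_def)
  also have "\<dots> = (\<Sum>q<d. \<Sum>us\<in>confs d m. f (q # us))"
    using sum.cartesian_product[of "\<lambda>q us. f (q # us)" "confs d m" "{..<d}"] by (simp add: split_def)
  finally show ?thesis .
qed

lemma confs_app_img: "confs d (a + b) = (\<lambda>(us,ws). us @ ws) ` (confs d a \<times> confs d b)"
proof
  show "confs d (a + b) \<subseteq> (\<lambda>(us,ws). us @ ws) ` (confs d a \<times> confs d b)"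
  proof
    fix xs assume xs: "xs \<in> confs d (a + b)"
    have "xs = (\<lambda>(us,ws). us @ ws) (take a xs, drop a xs)" by simp
    moreover have "(take a xs, drop a xs) \<in> confs d a \<times> confs d b"
      using xs unfolding confs_def by (auto dest: in_set_takeD in_set_dropD)
    ultimately show "xs \<in> (\<lambda>(us,ws). us @ ws) ` (confs d a \<times> confs d b)" by blast
  qed
qed (auto simp: confs_def)

lemma sum_confs_app: "(\<Sum>c\<in>confs d (a + b). f c) = (\<Sum>us\<in>confs d a. \<Sum>ws\<in>confs d b. f (us @ ws))"
proof -
  have inj: "inj_on (\<lambda>(us,ws). us @ ws) (confs d a \<times> confs d b)"
    by (auto simp: inj_on_def confs_def)
  have "(\<Sum>c\<in>confs d (a + b). f c) = (\<Sum>x\<in>confs d a \<times> confs d b. f (case x of (us,ws) \<Rightarrow> us @ ws))"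
    unfolding confs_app_img by (subst sum.reindex[OF inj], simp add: comp_def)
  also have "\<dots> = (\<Sum>us\<in>confs d a. \<Sum>ws\<in>confs d b. f (us @ ws))"
    using sum.cartesian_product[of "\<lambda>us ws. f (us @ ws)" "confs d b" "confs d a"] by (simp add: split_def)
  finally show ?thesis .
qed

lemma reduced_dm_carrier[simp]: "reduced_dm d m psi ks \<in> carrier_mat (d ^ length ks) (d ^ length ks)"
  by (simp add: reduced_dm_def)

lemma reduced_dm_index:
  "i < d ^ length ks \<Longrightarrow> j < d ^ length ks \<Longrightarrow> reduced_dm d m psi ks $$ (i,j) =
    (\<Sum>xs\<in>confs d m. \<Sum>ys\<in>confs d m.
          if enc d (map (nth xs) ks) = i \<and> enc d (map (nth ys) ks) = j \<and>
             (\<forall>l<m. l \<notin> set ks \<longrightarrow> xs ! l = ys ! l)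
          then psi xs * cnj (psi ys) else 0)"
  by (simp add: reduced_dm_def)

lemma reduced_psd:
  "\<exists>k M. M \<in> carrier_mat (d ^ length ks) k \<and> reduced_dm d m psi ks = M * adj M"
proof -
  define DD where "DD = d ^ length ks"
  define key where "key xs = (\<lambda>l. if l < m \<and> l \<notin> set ks then xs ! l else (0::nat))" for xs :: "nat list"
  define en where "en xs = enc d (map (nth xs) ks)" for xs
  define K where "K = key ` confs d m"
  have fK: "finite K" unfolding K_def by simp
  obtain h where h: "bij_betw h {0..<card K} K" using ex_bij_betw_nat_finite[OF fK] by auto
  define F where "F i \<kappa> = (\<Sum>xs\<in>confs d m. if en xs = i \<and> key xs = \<kappa> then psi xs else 0)" for i \<kappa>
  define M where "M = mat DD (card K) (\<lambda>(i,r). F i (h r))"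
  have Mc: "M \<in> carrier_mat DD (card K)" unfolding M_def by simp
  have keyeq: "(\<forall>l<m. l \<notin> set ks \<longrightarrow> xs ! l = ys ! l) \<longleftrightarrow> key xs = key ys" for xs ys
    unfolding key_def by (auto simp: fun_eq_iff)
  have "reduced_dm d m psi ks = M * adj M"
  proof (rule eq_matI)
    fix i j assume "i < dim_row (M * adj M)" "j < dim_col (M * adj M)"
    hence i: "i < DD" and j: "j < DD" using Mc by auto
    have "(M * adj M) $$ (i,j) = (\<Sum>r<card K. M $$ (i,r) * adj M $$ (r,j))"
      by (rule mult_entry[OF Mc adj_carrier[OF Mc] i j])
    also have "\<dots> = (\<Sum>r\<in>{0..<card K}. F i (h r) * cnj (F j (h r)))"
      using i j Mc by (intro sum.cong, auto simp: M_def)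
    also have "\<dots> = (\<Sum>\<kappa>\<in>K. F i \<kappa> * cnj (F j \<kappa>))"
      using sum.reindex_bij_betw[OF h, of "\<lambda>\<kappa>. F i \<kappa> * cnj (F j \<kappa>)"] by simp
    also have "\<dots> = (\<Sum>\<kappa>\<in>K. \<Sum>xs\<in>confs d m. \<Sum>ys\<in>confs d m.
        if en xs = i \<and> en ys = j \<and> key xs = \<kappa> \<and> key ys = \<kappa> then psi xs * cnj (psi ys) else 0)"
      unfolding F_def cnj_sum sum_product by (intro sum.cong refl, auto)
    also have "\<dots> = (\<Sum>xs\<in>confs d m. \<Sum>ys\<in>confs d m. \<Sum>\<kappa>\<in>K.
        if en xs = i \<and> en ys = j \<and> key xs = \<kappa> \<and> key ys = \<kappa> then psi xs * cnj (psi ys) else 0)"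
      by (subst sum.swap, subst (2) sum.swap, rule refl)
    also have "\<dots> = (\<Sum>xs\<in>confs d m. \<Sum>ys\<in>confs d m.
        if en xs = i \<and> en ys = j \<and> key xs = key ys then psi xs * cnj (psi ys) else 0)"
    proof (intro sum.cong refl)
      fix xs ys assume xs: "xs \<in> confs d m" and ys: "ys \<in> confs d m"
      have kx: "key xs \<in> K" unfolding K_def using xs by simp
      show "(\<Sum>\<kappa>\<in>K. if en xs = i \<and> en ys = j \<and> key xs = \<kappa> \<and> key ys = \<kappa> then psi xs * cnj (psi ys) else 0)
          = (if en xs = i \<and> en ys = j \<and> key xs = key ys then psi xs * cnj (psi ys) else 0)"
      proof (cases "en xs = i \<and> en ys = j \<and> key xs = key ys")
        case True
        have "(\<Sum>\<kappa>\<in>K. if en xs = i \<and> en ys = j \<and> key xs = \<kappa> \<and> key ys = \<kappa> then psi xs * cnj (psi ys) else 0)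
            = (\<Sum>\<kappa>\<in>K. if \<kappa> = key xs then psi xs * cnj (psi ys) else 0)"
          using True by (intro sum.cong, auto)
        then show ?thesis using True kx fK by simp
      next
        case False
        then show ?thesis by (auto intro!: sum.neutral)
      qed
    qed
    also have "\<dots> = reduced_dm d m psi ks $$ (i,j)"
      using i j unfolding DD_def by (simp add: reduced_dm_index en_def keyeq)
    finally show "reduced_dm d m psi ks $$ (i,j) = (M * adj M) $$ (i,j)" by simp
  qed (use Mc in \<open>auto simp: DD_def reduced_dm_def\<close>)
  thus ?thesis using Mc unfolding DD_def by blast
qed

lemma sum_split_dd:
  fixes d :: nat
  assumes d: "d > 0"
  shows "(\<Sum>i<d*d. f i) = (\<Sum>x<d. \<Sum>q<d. f (q + d * x))"
proof -
  have bij: "bij_betw (\<lambda>(q,x). q + d * x) ({..<d} \<times> {..<d}) {..<d*d}"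
  proof (rule bij_betw_byWitness[where f' = "\<lambda>i. (i mod d, i div d)"])
    show "\<forall>a\<in>{..<d} \<times> {..<d}. (\<lambda>i. (i mod d, i div d)) ((\<lambda>(q, x). q + d * x) a) = a"
      using d by auto
    show "\<forall>a'\<in>{..<d * d}. (\<lambda>(q, x). q + d * x) ((\<lambda>i. (i mod d, i div d)) a') = a'"
      by (auto simp: mult.commute)
    show "(\<lambda>(q, x). q + d * x) ` ({..<d} \<times> {..<d}) \<subseteq> {..<d * d}"
    proof
      fix i assume "i \<in> (\<lambda>(q, x). q + d * x) ` ({..<d} \<times> {..<d})"
      then obtain q x where "q < d" "x < d" "i = q + d * x" by auto
      moreover have "q + d * x < d + d * x" using \<open>q < d\<close> by simp
      moreover have "d + d * x \<le> d * d" using \<open>x < d\<close>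
        by (metis mult_Suc_right mult_le_mono2 Suc_leI)
      ultimately show "i \<in> {..<d*d}" by simp
    qed
    show "(\<lambda>i. (i mod d, i div d)) ` {..<d * d} \<subseteq> {..<d} \<times> {..<d}"
      using d by (auto simp: less_mult_imp_div_less)
  qed
  have "(\<Sum>i<d*d. f i) = (\<Sum>p\<in>{..<d} \<times> {..<d}. f (case p of (q,x) \<Rightarrow> q + d * x))"
    using sum.reindex_bij_betw[OF bij, of f] by (simp add: case_prod_beta)
  also have "\<dots> = (\<Sum>q<d. \<Sum>x<d. f (q + d * x))"
    using sum.cartesian_product[of "\<lambda>q x. f (q + d * x)" "{..<d}" "{..<d}"] by (simp add: split_def)
  also have "\<dots> = (\<Sum>x<d. \<Sum>q<d. f (q + d * x))" by (rule sum.swap)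
  finally show ?thesis .
qed



definition gfun :: "nat \<Rightarrow> nat \<Rightarrow> (nat \<Rightarrow> complex) \<Rightarrow> (nat \<Rightarrow> nat \<Rightarrow> nat \<Rightarrow> complex) \<Rightarrow> nat list \<Rightarrow> complex" where
  "gfun d n alpha b us = alpha (us ! 0) * (\<Prod>i\<in>{2..n}. Umat d b i (us ! (i - 2)) (us ! (i - 1)))"

lemma psu_cons: "unamp_state d n alpha b (q # us) = gfun d n alpha b us * b n (us ! (n - 1)) q"
  by (simp add: unamp_state_def gfun_def)

lemma psa_app: "length us = n \<Longrightarrow>
  amp_state d n alpha b (q # us @ ws) = (if ws = us then unamp_state d n alpha b (q # us) else 0)"
  by (simp add: amp_state_def)

lemma sum_amp:
  assumes f0: "\<And>x. f 0 x = 0"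
  shows "(\<Sum>c\<in>confs d (2*n+1). f (amp_state d n alpha b c) c) =
         (\<Sum>q<d. \<Sum>us\<in>confs d n. f (unamp_state d n alpha b (q # us)) (q # us @ us))"
proof -
  have "(\<Sum>c\<in>confs d (2*n+1). f (amp_state d n alpha b c) c) =
        (\<Sum>q<d. \<Sum>zs\<in>confs d (n+n). f (amp_state d n alpha b (q # zs)) (q # zs))"
    using sum_confs_Suc[where d=d and m="n+n"] by (simp add: mult_2)
  also have "\<dots> = (\<Sum>q<d. \<Sum>us\<in>confs d n. \<Sum>ws\<in>confs d n. f (amp_state d n alpha b (q # us @ ws)) (q # us @ ws))"
    by (rule sum.cong[OF refl], rule sum_confs_app)
  also have "\<dots> = (\<Sum>q<d. \<Sum>us\<in>confs d n. f (unamp_state d n alpha b (q # us)) (q # us @ us))"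
  proof (intro sum.cong refl)
    fix q us assume us: "us \<in> confs d n"
    hence lus: "length us = n" unfolding confs_def by simp
    have "(\<Sum>ws\<in>confs d n. f (amp_state d n alpha b (q # us @ ws)) (q # us @ ws)) =
          (\<Sum>ws\<in>confs d n. if ws = us then f (unamp_state d n alpha b (q # us)) (q # us @ us) else 0)"
      by (intro sum.cong refl, auto simp: psa_app[OF lus] f0)
    also have "\<dots> = f (unamp_state d n alpha b (q # us)) (q # us @ us)" using us by simp
    finally show "(\<Sum>ws\<in>confs d n. f (amp_state d n alpha b (q # us @ ws)) (q # us @ ws)) =
          f (unamp_state d n alpha b (q # us)) (q # us @ us)" .
  qed
  finally show ?thesis .
qed

definition F4 :: "nat \<Rightarrow> nat \<Rightarrow> (nat \<Rightarrow> complex) \<Rightarrow> (nat \<Rightarrow> nat \<Rightarrow> nat \<Rightarrow> complex) \<Rightarrow>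
   (nat \<Rightarrow> nat list \<Rightarrow> nat \<Rightarrow> nat list \<Rightarrow> bool) \<Rightarrow> complex" where
  "F4 d n alpha b P = (\<Sum>q<d. \<Sum>us\<in>confs d n. \<Sum>q'<d. \<Sum>vs\<in>confs d n.
      if P q us q' vs then unamp_state d n alpha b (q # us) * cnj (unamp_state d n alpha b (q' # vs)) else 0)"

lemma F4_cong:
  assumes "\<And>q us q' vs. q < d \<Longrightarrow> us \<in> confs d n \<Longrightarrow> q' < d \<Longrightarrow> vs \<in> confs d n \<Longrightarrow>
     P q us q' vs = P' q us q' vs"
  shows "F4 d n alpha b P = F4 d n alpha b P'"
  unfolding F4_def using assms by (intro sum.cong refl) auto

lemma reduced_amp:
  assumes i: "i < d ^ length ks" and j: "j < d ^ length ks"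
  shows "reduced_dm d (2*n+1) (amp_state d n alpha b) ks $$ (i,j) =
    F4 d n alpha b (\<lambda>q us q' vs. enc d (map (nth (q # us @ us)) ks) = i \<and> enc d (map (nth (q' # vs @ vs)) ks) = j \<and>
             (\<forall>l<2*n+1. l \<notin> set ks \<longrightarrow> (q # us @ us) ! l = (q' # vs @ vs) ! l))"
proof -
  define C where "C xs ys \<longleftrightarrow> enc d (map (nth xs) ks) = i \<and> enc d (map (nth ys) ks) = j \<and>
             (\<forall>l<2*n+1. l \<notin> set ks \<longrightarrow> xs ! l = ys ! l)" for xs ys
  let ?pa = "amp_state d n alpha b" and ?pu = "unamp_state d n alpha b"
  have "reduced_dm d (2*n+1) ?pa ks $$ (i,j) =
     (\<Sum>xs\<in>confs d (2*n+1). \<Sum>ys\<in>confs d (2*n+1). if C xs ys then ?pa xs * cnj (?pa ys) else 0)"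
    unfolding reduced_dm_index[OF i j] C_def ..
  also have "\<dots> = (\<Sum>xs\<in>confs d (2*n+1). \<Sum>q'<d. \<Sum>vs\<in>confs d n.
        if C xs (q' # vs @ vs) then ?pa xs * cnj (?pu (q' # vs)) else 0)"
  proof (intro sum.cong refl)
    fix xs
    show "(\<Sum>ys\<in>confs d (2*n+1). if C xs ys then ?pa xs * cnj (?pa ys) else 0) =
      (\<Sum>q'<d. \<Sum>vs\<in>confs d n. if C xs (q' # vs @ vs) then ?pa xs * cnj (?pu (q' # vs)) else 0)"
      using sum_amp[of "\<lambda>z ys. if C xs ys then ?pa xs * cnj z else 0" d n alpha b] by simp
  qed
  also have "\<dots> = (\<Sum>q<d. \<Sum>us\<in>confs d n. \<Sum>q'<d. \<Sum>vs\<in>confs d n.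
        if C (q # us @ us) (q' # vs @ vs) then ?pu (q # us) * cnj (?pu (q' # vs)) else 0)"
    using sum_amp[of "\<lambda>z xs. \<Sum>q'<d. \<Sum>vs\<in>confs d n. if C xs (q' # vs @ vs) then z * cnj (?pu (q' # vs)) else 0" d n alpha b]
    by simp
  finally show ?thesis unfolding F4_def C_def .
qed

lemma reduced_unamp:
  assumes i: "i < d ^ length ks" and j: "j < d ^ length ks"
  shows "reduced_dm d (n+1) (unamp_state d n alpha b) ks $$ (i,j) =
    F4 d n alpha b (\<lambda>q us q' vs. enc d (map (nth (q # us)) ks) = i \<and> enc d (map (nth (q' # vs)) ks) = j \<and>
             (\<forall>l<n+1. l \<notin> set ks \<longrightarrow> (q # us) ! l = (q' # vs) ! l))"
  unfolding reduced_dm_index[OF i j] F4_def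
  by (simp add: sum_confs_Suc sum.swap[of _ "confs d (Suc n)"])



definition agr :: "nat \<Rightarrow> nat list \<Rightarrow> nat list \<Rightarrow> bool" where
  "agr n us vs \<longleftrightarrow> (\<forall>l<n-1. us ! l = vs ! l)"

lemma agr_refl[simp]: "agr n us us" by (simp add: agr_def)

lemma agr_last: "length us = n \<Longrightarrow> length vs = n \<Longrightarrow> n \<ge> 1 \<Longrightarrow>
  agr n us vs \<Longrightarrow> us ! (n-1) = vs ! (n-1) \<Longrightarrow> us = vs"
proof (rule nth_equalityI)
  fix k assume H: "length us = n" "length vs = n" "n \<ge> 1" "agr n us vs" "us ! (n-1) = vs ! (n-1)"
    and k: "k < length us"
  show "us ! k = vs ! k"
  proof (cases "k < n - 1")
    case True then show ?thesis using H unfolding agr_def by auto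
  next
    case False
    hence "k = n - 1" using k H by auto
    then show ?thesis using H by simp
  qed
qed simp

lemma agrA0: assumes "length us = n" "length vs = n"
  shows "(\<forall>l<2*n+1. l \<notin> set [0] \<longrightarrow> (q#us@us)!l = (q'#vs@vs)!l) \<longleftrightarrow> us = vs"
proof
  assume H: "\<forall>l<2*n+1. l \<notin> set [0] \<longrightarrow> (q#us@us)!l = (q'#vs@vs)!l"
  show "us = vs"
  proof (rule nth_equalityI)
    fix k assume k: "k < length us"
    from H[rule_format, of "Suc k"] k assms show "us ! k = vs ! k" by (simp add: nth_append)
  qed (use assms in simp)
next
  assume "us = vs" thus "\<forall>l<2*n+1. l \<notin> set [0] \<longrightarrow> (q#us@us)!l = (q'#vs@vs)!l"
    by (auto simp: nth_Cons')
qed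

lemma agrA2n: assumes "length us = n" "length vs = n" "n \<ge> 1"
  shows "(\<forall>l<2*n+1. l \<notin> set [2*n] \<longrightarrow> (q#us@us)!l = (q'#vs@vs)!l) \<longleftrightarrow> q = q' \<and> us = vs"
proof
  assume H: "\<forall>l<2*n+1. l \<notin> set [2*n] \<longrightarrow> (q#us@us)!l = (q'#vs@vs)!l"
  have "q = q'" using H[rule_format, of 0] assms by simp
  moreover have "us = vs"
  proof (rule nth_equalityI)
    fix k assume k: "k < length us"
    from H[rule_format, of "Suc k"] k assms show "us ! k = vs ! k" by (simp add: nth_append)
  qed (use assms in simp)
  ultimately show "q = q' \<and> us = vs" ..
next
  assume "q = q' \<and> us = vs" thus "\<forall>l<2*n+1. l \<notin> set [2*n] \<longrightarrow> (q#us@us)!l = (q'#vs@vs)!l"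
    by auto
qed

lemma agrA02n: assumes "length us = n" "length vs = n" "n \<ge> 1"
  shows "(\<forall>l<2*n+1. l \<notin> set [0, 2*n] \<longrightarrow> (q#us@us)!l = (q'#vs@vs)!l) \<longleftrightarrow> us = vs"
proof
  assume H: "\<forall>l<2*n+1. l \<notin> set [0, 2*n] \<longrightarrow> (q#us@us)!l = (q'#vs@vs)!l"
  show "us = vs"
  proof (rule nth_equalityI)
    fix k assume k: "k < length us"
    from H[rule_format, of "Suc k"] k assms show "us ! k = vs ! k" by (simp add: nth_append)
  qed (use assms in simp)
next
  assume "us = vs" thus "\<forall>l<2*n+1. l \<notin> set [0, 2*n] \<longrightarrow> (q#us@us)!l = (q'#vs@vs)!l"
    by (auto simp: nth_Cons')
qed

lemma agrU0: assumes "length us = n" "length vs = n"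
  shows "(\<forall>l<n+1. l \<notin> set [0] \<longrightarrow> (q#us)!l = (q'#vs)!l) \<longleftrightarrow> us = vs"
proof
  assume H: "\<forall>l<n+1. l \<notin> set [0] \<longrightarrow> (q#us)!l = (q'#vs)!l"
  show "us = vs"
  proof (rule nth_equalityI)
    fix k assume k: "k < length us"
    from H[rule_format, of "Suc k"] k assms show "us ! k = vs ! k" by simp
  qed (use assms in simp)
next
  assume "us = vs" thus "\<forall>l<n+1. l \<notin> set [0] \<longrightarrow> (q#us)!l = (q'#vs)!l"
    by (auto simp: nth_Cons')
qed

lemma agrUn: assumes "length us = n" "length vs = n" "n \<ge> 1"
  shows "(\<forall>l<n+1. l \<notin> set [n] \<longrightarrow> (q#us)!l = (q'#vs)!l) \<longleftrightarrow> q = q' \<and> agr n us vs"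
proof
  assume H: "\<forall>l<n+1. l \<notin> set [n] \<longrightarrow> (q#us)!l = (q'#vs)!l"
  have "q = q'" using H[rule_format, of 0] assms by simp
  moreover have "agr n us vs" unfolding agr_def
  proof (intro allI impI)
    fix k assume k: "k < n - 1"
    from H[rule_format, of "Suc k"] k assms show "us ! k = vs ! k" by simp
  qed
  ultimately show "q = q' \<and> agr n us vs" ..
next
  assume A: "q = q' \<and> agr n us vs"
  show "\<forall>l<n+1. l \<notin> set [n] \<longrightarrow> (q#us)!l = (q'#vs)!l"
  proof (intro allI impI)
    fix l assume l: "l < n + 1" "l \<notin> set [n]"
    show "(q#us)!l = (q'#vs)!l"
    proof (cases l)
      case 0 then show ?thesis using A by simp
    next
      case (Suc k) then show ?thesis using A l unfolding agr_def by auto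
    qed
  qed
qed

lemma agrU0n: assumes "length us = n" "length vs = n" "n \<ge> 1"
  shows "(\<forall>l<n+1. l \<notin> set [0, n] \<longrightarrow> (q#us)!l = (q'#vs)!l) \<longleftrightarrow> agr n us vs"
proof
  assume H: "\<forall>l<n+1. l \<notin> set [0, n] \<longrightarrow> (q#us)!l = (q'#vs)!l"
  show "agr n us vs" unfolding agr_def
  proof (intro allI impI)
    fix k assume k: "k < n - 1"
    from H[rule_format, of "Suc k"] k assms show "us ! k = vs ! k" by simp
  qed
next
  assume A: "agr n us vs"
  show "\<forall>l<n+1. l \<notin> set [0, n] \<longrightarrow> (q#us)!l = (q'#vs)!l"
  proof (intro allI impI)
    fix l assume l: "l < n + 1" "l \<notin> set [0, n]"
    then obtain k where "l = Suc k" by (cases l, auto)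
    then show "(q#us)!l = (q'#vs)!l" using A l unfolding agr_def by auto
  qed
qed



lemma confs_len: "us \<in> confs d n \<Longrightarrow> length us = n" unfolding confs_def by simp
lemma confs_lt: "us \<in> confs d n \<Longrightarrow> k < n \<Longrightarrow> us ! k < d" unfolding confs_def by auto

lemma nth_2n: "length us = n \<Longrightarrow> n \<ge> 1 \<Longrightarrow> (q # us @ us) ! (2*n) = us ! (n-1)"
proof -
  assume l: "length us = n" and n: "n \<ge> 1"
  have "2*n = Suc (2*n - 1)" using n by simp
  hence "(q # us @ us) ! (2*n) = (us @ us) ! (2*n - 1)" by (metis nth_Cons_Suc)
  also have "\<dots> = us ! (2*n - 1 - n)" using l n by (simp add: nth_append)
  also have "2*n - 1 - n = n - 1" by simp
  finally show ?thesis .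
qed

lemma nth_n: "length us = n \<Longrightarrow> n \<ge> 1 \<Longrightarrow> (q # us) ! n = us ! (n-1)"
  by (cases n, auto)

lemma F4_reorder: "F4 d n alpha b P = (\<Sum>us\<in>confs d n. \<Sum>vs\<in>confs d n. \<Sum>q<d. \<Sum>q'<d.
      if P q us q' vs then unamp_state d n alpha b (q # us) * cnj (unamp_state d n alpha b (q' # vs)) else 0)"
proof -
  let ?T = "\<lambda>q us q' vs. if P q us q' vs then unamp_state d n alpha b (q # us) * cnj (unamp_state d n alpha b (q' # vs)) else 0"
  have "F4 d n alpha b P = (\<Sum>q<d. \<Sum>us\<in>confs d n. \<Sum>vs\<in>confs d n. \<Sum>q'<d. ?T q us q' vs)"
    unfolding F4_def by (rule sum.cong[OF refl], rule sum.cong[OF refl], rule sum.swap)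
  also have "\<dots> = (\<Sum>us\<in>confs d n. \<Sum>q<d. \<Sum>vs\<in>confs d n. \<Sum>q'<d. ?T q us q' vs)"
    by (rule sum.swap)
  also have "\<dots> = (\<Sum>us\<in>confs d n. \<Sum>vs\<in>confs d n. \<Sum>q<d. \<Sum>q'<d. ?T q us q' vs)"
    by (rule sum.cong[OF refl], rule sum.swap)
  finally show ?thesis .
qed

lemma F4_False: "F4 d n alpha b (\<lambda>_ _ _ _. False) = 0" unfolding F4_def by simp

lemma divmod_dq: "(q::nat) < d \<Longrightarrow> (q + d * x) div d = x" "(q::nat) < d \<Longrightarrow> (q + d * x) mod d = q"
  by auto

context
  fixes d n :: nat and alpha :: "nat \<Rightarrow> complex" and b :: "nat \<Rightarrow> nat \<Rightarrow> nat \<Rightarrow> complex"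
  assumes n1: "n \<ge> 1" and d0: "d > 0"
    and orth: "\<And>x y. x < d \<Longrightarrow> y < d \<Longrightarrow> (\<Sum>q<d. cnj (b n x q) * b n y q) = (if x = y then 1 else 0)"
begin

lemma E1: "reduced_dm d (2*n+1) (amp_state d n alpha b) [0] = reduced_dm d (n+1) (unamp_state d n alpha b) [0]"
proof (rule eq_matI)
  fix i j assume "i < dim_row (reduced_dm d (n+1) (unamp_state d n alpha b) [0])"
    "j < dim_col (reduced_dm d (n+1) (unamp_state d n alpha b) [0])"
  hence i: "i < d ^ length [0::nat]" and j: "j < d ^ length [0::nat]" by (auto simp: reduced_dm_def)
  show "reduced_dm d (2*n+1) (amp_state d n alpha b) [0] $$ (i,j) = reduced_dm d (n+1) (unamp_state d n alpha b) [0] $$ (i,j)"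
    unfolding reduced_amp[OF i j] reduced_unamp[OF i j]
  proof (rule F4_cong)
    fix q us q' vs assume "us \<in> confs d n" "vs \<in> confs d n"
    hence l1: "length us = n" and l2: "length vs = n" by (auto simp: confs_len)
    show "(enc d (map (nth (q # us @ us)) [0]) = i \<and> enc d (map (nth (q' # vs @ vs)) [0]) = j \<and>
             (\<forall>l<2*n+1. l \<notin> set [0] \<longrightarrow> (q # us @ us) ! l = (q' # vs @ vs) ! l)) =
          (enc d (map (nth (q # us)) [0]) = i \<and> enc d (map (nth (q' # vs)) [0]) = j \<and>
             (\<forall>l<n+1. l \<notin> set [0] \<longrightarrow> (q # us) ! l = (q' # vs) ! l))"
      unfolding agrA0[OF l1 l2] agrU0[OF l1 l2] by simp
  qed
qed (auto simp: reduced_dm_def)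

lemma orth_conj: "x < d \<Longrightarrow> y < d \<Longrightarrow> x \<noteq> y \<Longrightarrow> (\<Sum>q<d. b n x q * cnj (b n y q)) = 0"
  using orth[of y x] by (simp add: mult.commute)

lemma E2: "reduced_dm d (2*n+1) (amp_state d n alpha b) [2*n] = reduced_dm d (n+1) (unamp_state d n alpha b) [n]"
proof (rule eq_matI)
  fix i j assume "i < dim_row (reduced_dm d (n+1) (unamp_state d n alpha b) [n])"
    "j < dim_col (reduced_dm d (n+1) (unamp_state d n alpha b) [n])"
  hence i: "i < d ^ length [n]" and j: "j < d ^ length [n]" by (auto simp: reduced_dm_def)
  have i2: "i < d ^ length [2*n]" and j2: "j < d ^ length [2*n]" using i j by auto
  let ?pu = "unamp_state d n alpha b"
  have "reduced_dm d (2*n+1) (amp_state d n alpha b) [2*n] $$ (i,j) =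
     F4 d n alpha b (\<lambda>q us q' vs. us ! (n-1) = i \<and> vs ! (n-1) = j \<and> q = q' \<and> us = vs)"
    unfolding reduced_amp[OF i2 j2]
  proof (rule F4_cong)
    fix q us q' vs assume "us \<in> confs d n" "vs \<in> confs d n"
    hence l1: "length us = n" and l2: "length vs = n" by (auto simp: confs_len)
    show "(enc d (map (nth (q # us @ us)) [2*n]) = i \<and> enc d (map (nth (q' # vs @ vs)) [2*n]) = j \<and>
             (\<forall>l<2*n+1. l \<notin> set [2*n] \<longrightarrow> (q # us @ us) ! l = (q' # vs @ vs) ! l)) =
          (us ! (n-1) = i \<and> vs ! (n-1) = j \<and> q = q' \<and> us = vs)"
      unfolding agrA2n[OF l1 l2 n1] by (simp add: nth_2n[OF l1 n1] nth_2n[OF l2 n1])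
  qed
  also have "\<dots> = F4 d n alpha b (\<lambda>q us q' vs. us ! (n-1) = i \<and> vs ! (n-1) = j \<and> q = q' \<and> agr n us vs)"
    unfolding F4_reorder
  proof (rule sum.cong[OF refl], rule sum.cong[OF refl])
    fix us vs assume us: "us \<in> confs d n" and vs: "vs \<in> confs d n"
    show "(\<Sum>q<d. \<Sum>q'<d. if us ! (n-1) = i \<and> vs ! (n-1) = j \<and> q = q' \<and> us = vs then ?pu (q # us) * cnj (?pu (q' # vs)) else 0) =
          (\<Sum>q<d. \<Sum>q'<d. if us ! (n-1) = i \<and> vs ! (n-1) = j \<and> q = q' \<and> agr n us vs then ?pu (q # us) * cnj (?pu (q' # vs)) else 0)"
    proof (cases "us = vs")
      case True then show ?thesis by simp
    next
      case False
      show ?thesis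
      proof (cases "agr n us vs \<and> us ! (n-1) = i \<and> vs ! (n-1) = j")
        case False2: False
        then show ?thesis using \<open>us \<noteq> vs\<close> by (auto intro!: sum.neutral)
      next
        case True
        have neq: "us ! (n-1) \<noteq> vs ! (n-1)" using agr_last[OF confs_len[OF us] confs_len[OF vs] n1] True False by blast
        have x: "us ! (n-1) < d" and y: "vs ! (n-1) < d" using confs_lt[OF us] confs_lt[OF vs] n1 by auto
        have "(\<Sum>q<d. \<Sum>q'<d. if us ! (n-1) = i \<and> vs ! (n-1) = j \<and> q = q' \<and> agr n us vs then ?pu (q # us) * cnj (?pu (q' # vs)) else 0)
            = (\<Sum>q<d. ?pu (q # us) * cnj (?pu (q # vs)))"
          using True by (intro sum.cong refl, simp add: if_distrib)
        also have "\<dots> = gfun d n alpha b us * cnj (gfun d n alpha b vs) * (\<Sum>q<d. b n (us ! (n-1)) q * cnj (b n (vs ! (n-1)) q))"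
          unfolding psu_cons sum_distrib_left by (intro sum.cong refl, simp add: algebra_simps)
        also have "\<dots> = 0" using orth_conj[OF x y neq] by simp
        finally show ?thesis using False by simp
      qed
    qed
  qed
  also have "\<dots> = reduced_dm d (n+1) (unamp_state d n alpha b) [n] $$ (i,j)"
    unfolding reduced_unamp[OF i j]
  proof (rule F4_cong)
    fix q us q' vs assume "us \<in> confs d n" "vs \<in> confs d n"
    hence l1: "length us = n" and l2: "length vs = n" by (auto simp: confs_len)
    show "(us ! (n-1) = i \<and> vs ! (n-1) = j \<and> q = q' \<and> agr n us vs) =
          (enc d (map (nth (q # us)) [n]) = i \<and> enc d (map (nth (q' # vs)) [n]) = j \<and>
             (\<forall>l<n+1. l \<notin> set [n] \<longrightarrow> (q # us) ! l = (q' # vs) ! l))"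
      unfolding agrUn[OF l1 l2 n1] by (simp add: nth_n[OF l1 n1] nth_n[OF l2 n1])
  qed
  finally show "reduced_dm d (2*n+1) (amp_state d n alpha b) [2*n] $$ (i,j) = reduced_dm d (n+1) (unamp_state d n alpha b) [n] $$ (i,j)" .
qed (auto simp: reduced_dm_def)

end


definition Gm :: "nat \<Rightarrow> nat \<Rightarrow> (nat \<Rightarrow> complex) \<Rightarrow> (nat \<Rightarrow> nat \<Rightarrow> nat \<Rightarrow> complex) \<Rightarrow> nat \<Rightarrow> nat \<Rightarrow> complex" where
  "Gm d n alpha b x y = (\<Sum>us\<in>confs d n. \<Sum>vs\<in>confs d n.
     if us ! (n-1) = x \<and> vs ! (n-1) = y \<and> agr n us vs then gfun d n alpha b us * cnj (gfun d n alpha b vs) else 0)"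

lemma eq_dm: "(q::nat) < d \<Longrightarrow> (q + d * x = i) = (q = i mod d \<and> x = i div d)"
proof
  assume q: "q < d" and e: "q + d * x = i"
  show "q = i mod d \<and> x = i div d" using divmod_dq[OF q, of x] e by auto
next
  assume "q = i mod d \<and> x = i div d"
  thus "q + d * x = i" by simp
qed

lemma double_delta:
  assumes a: "(a::nat) < d" and c: "(c::nat) < d"
  shows "(\<Sum>q<d. \<Sum>q'<d. if q = a \<and> X \<and> q' = c \<and> Y then T q q' else 0) = (if X \<and> Y then T a c else (0::complex))"
proof (cases "X \<and> Y")
  case True
  have "(\<Sum>q<d. \<Sum>q'<d. if q = a \<and> X \<and> q' = c \<and> Y then T q q' else 0) =
        (\<Sum>q<d. if q = a then (\<Sum>q'<d. if q' = c then T q q' else 0) else 0)"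
    using True by (intro sum.cong refl, auto)
  also have "\<dots> = T a c" using a c by simp
  finally show ?thesis using True by simp
next
  case False
  then show ?thesis by (auto intro!: sum.neutral)
qed

context
  fixes d n :: nat and alpha :: "nat \<Rightarrow> complex" and b :: "nat \<Rightarrow> nat \<Rightarrow> nat \<Rightarrow> complex"
  assumes n1: "n \<ge> 1" and d0: "d > 0"
begin

lemma R02a_F4:
  assumes i: "i < d * d" and j: "j < d * d"
  shows "reduced_dm d (2*n+1) (amp_state d n alpha b) [0, 2*n] $$ (i,j) =
     F4 d n alpha b (\<lambda>q us q' vs. q + d * us ! (n-1) = i \<and> q' + d * vs ! (n-1) = j \<and> us = vs)"
proof -
  have i2: "i < d ^ length [0, 2*n]" and j2: "j < d ^ length [0, 2*n]" using i j by (auto simp: power2_eq_square)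
  show ?thesis unfolding reduced_amp[OF i2 j2]
  proof (rule F4_cong)
    fix q us q' vs assume "us \<in> confs d n" "vs \<in> confs d n"
    hence l1: "length us = n" and l2: "length vs = n" by (auto simp: confs_len)
    show "(enc d (map (nth (q # us @ us)) [0, 2*n]) = i \<and> enc d (map (nth (q' # vs @ vs)) [0, 2*n]) = j \<and>
             (\<forall>l<2*n+1. l \<notin> set [0, 2*n] \<longrightarrow> (q # us @ us) ! l = (q' # vs @ vs) ! l)) =
          (q + d * us ! (n-1) = i \<and> q' + d * vs ! (n-1) = j \<and> us = vs)"
      unfolding agrA02n[OF l1 l2 n1] by (simp add: nth_2n[OF l1 n1] nth_2n[OF l2 n1])
  qed
qed

lemma R0nu_F4:
  assumes i: "i < d * d" and j: "j < d * d"
  shows "reduced_dm d (n+1) (unamp_state d n alpha b) [0, n] $$ (i,j) =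
     F4 d n alpha b (\<lambda>q us q' vs. q + d * us ! (n-1) = i \<and> q' + d * vs ! (n-1) = j \<and> agr n us vs)"
proof -
  have i2: "i < d ^ length [0, n]" and j2: "j < d ^ length [0, n]" using i j by (auto simp: power2_eq_square)
  show ?thesis unfolding reduced_unamp[OF i2 j2]
  proof (rule F4_cong)
    fix q us q' vs assume "us \<in> confs d n" "vs \<in> confs d n"
    hence l1: "length us = n" and l2: "length vs = n" by (auto simp: confs_len)
    show "(enc d (map (nth (q # us)) [0, n]) = i \<and> enc d (map (nth (q' # vs)) [0, n]) = j \<and>
             (\<forall>l<n+1. l \<notin> set [0, n] \<longrightarrow> (q # us) ! l = (q' # vs) ! l)) =
          (q + d * us ! (n-1) = i \<and> q' + d * vs ! (n-1) = j \<and> agr n us vs)"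
      unfolding agrU0n[OF l1 l2 n1] by (simp add: nth_n[OF l1 n1] nth_n[OF l2 n1])
  qed
qed

lemma E3:
  assumes i: "i < d * d" and j: "j < d * d"
  shows "reduced_dm d (2*n+1) (amp_state d n alpha b) [0, 2*n] $$ (i,j) =
     (if i div d = j div d then reduced_dm d (n+1) (unamp_state d n alpha b) [0, n] $$ (i,j) else 0)"
proof (cases "i div d = j div d")
  case True
  have "F4 d n alpha b (\<lambda>q us q' vs. q + d * us ! (n-1) = i \<and> q' + d * vs ! (n-1) = j \<and> us = vs) =
        F4 d n alpha b (\<lambda>q us q' vs. q + d * us ! (n-1) = i \<and> q' + d * vs ! (n-1) = j \<and> agr n us vs)"
  proof (rule F4_cong)
    fix q us q' vs assume q: "q < d" and us: "us \<in> confs d n" and q': "q' < d" and vs: "vs \<in> confs d n"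
    show "(q + d * us ! (n-1) = i \<and> q' + d * vs ! (n-1) = j \<and> us = vs) =
          (q + d * us ! (n-1) = i \<and> q' + d * vs ! (n-1) = j \<and> agr n us vs)"
    proof
      assume "q + d * us ! (n-1) = i \<and> q' + d * vs ! (n-1) = j \<and> agr n us vs"
      moreover hence "us ! (n-1) = vs ! (n-1)" using divmod_dq(1)[OF q] divmod_dq(1)[OF q'] True by metis
      ultimately show "q + d * us ! (n-1) = i \<and> q' + d * vs ! (n-1) = j \<and> us = vs"
        using agr_last[OF confs_len[OF us] confs_len[OF vs] n1] by blast
    qed auto
  qed
  then show ?thesis unfolding R02a_F4[OF i j] R0nu_F4[OF i j] using True by simp
next
  case False
  have "reduced_dm d (2*n+1) (amp_state d n alpha b) [0, 2*n] $$ (i,j) = F4 d n alpha b (\<lambda>_ _ _ _. False)"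
    unfolding R02a_F4[OF i j]
  proof (rule F4_cong)
    fix q us q' vs assume q: "q < d" and q': "q' < d"
    show "(q + d * us ! (n-1) = i \<and> q' + d * vs ! (n-1) = j \<and> us = vs) = False"
      using divmod_dq(1)[OF q] divmod_dq(1)[OF q'] False by metis
  qed
  then show ?thesis using False F4_False by simp
qed

lemma E4:
  assumes i: "i < d * d" and j: "j < d * d"
  shows "reduced_dm d (n+1) (unamp_state d n alpha b) [0, n] $$ (i,j) =
    Gm d n alpha b (i div d) (j div d) * (b n (i div d) (i mod d) * cnj (b n (j div d) (j mod d)))"
proof -
  let ?pu = "unamp_state d n alpha b"
  have a: "i mod d < d" and c: "j mod d < d" using d0 by auto
  have "reduced_dm d (n+1) ?pu [0, n] $$ (i,j) =
     F4 d n alpha b (\<lambda>q us q' vs. q = i mod d \<and> (us ! (n-1) = i div d) \<and> q' = j mod d \<and> (vs ! (n-1) = j div d \<and> agr n us vs))"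
    unfolding R0nu_F4[OF i j] by (rule F4_cong, simp add: eq_dm)
  also have "\<dots> = (\<Sum>us\<in>confs d n. \<Sum>vs\<in>confs d n.
      if us ! (n-1) = i div d \<and> vs ! (n-1) = j div d \<and> agr n us vs then ?pu (i mod d # us) * cnj (?pu (j mod d # vs)) else 0)"
    unfolding F4_reorder by (intro sum.cong refl, rule double_delta[OF a c])
  also have "\<dots> = (\<Sum>us\<in>confs d n. \<Sum>vs\<in>confs d n.
      (if us ! (n-1) = i div d \<and> vs ! (n-1) = j div d \<and> agr n us vs then gfun d n alpha b us * cnj (gfun d n alpha b vs) else 0)
        * (b n (i div d) (i mod d) * cnj (b n (j div d) (j mod d))))"
    by (intro sum.cong refl, auto simp: psu_cons)
  also have "\<dots> = Gm d n alpha b (i div d) (j div d) * (b n (i div d) (i mod d) * cnj (b n (j div d) (j mod d)))"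
    unfolding Gm_def sum_distrib_right ..
  finally show ?thesis .
qed

end


lemma mod_inj: "(x::nat) < d \<Longrightarrow> k < d \<Longrightarrow> k' < d \<Longrightarrow> (x + k) mod d = (x + k') mod d \<Longrightarrow> k = k'"
  by (smt (verit) add.assoc add.commute canonically_ordered_monoid_add_class.lessE mod_add_right_eq
    mod_add_self1 mod_less)

lemma mod_self: "(x::nat) < d \<Longrightarrow> k < d \<Longrightarrow> ((x + k) mod d = x) = (k = 0)"
  using mod_inj[of x d k 0] by auto

definition Vm :: "nat \<Rightarrow> nat \<Rightarrow> (nat \<Rightarrow> nat \<Rightarrow> nat \<Rightarrow> complex) \<Rightarrow> complex mat" where
  "Vm d n b = mat (d*d) (d*d) (\<lambda>(i,j). if i div d = j div d then b n ((i div d + j mod d) mod d) (i mod d) else 0)"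

context
  fixes d n :: nat and b :: "nat \<Rightarrow> nat \<Rightarrow> nat \<Rightarrow> complex"
  assumes d0: "d > 0"
    and orth: "\<And>x y. x < d \<Longrightarrow> y < d \<Longrightarrow> (\<Sum>q<d. cnj (b n x q) * b n y q) = (if x = y then 1 else 0)"
begin

lemma Vc: "Vm d n b \<in> carrier_mat (d*d) (d*d)" unfolding Vm_def by simp

lemma V_entry: "q < d \<Longrightarrow> x < d \<Longrightarrow> a < d * d \<Longrightarrow>
   Vm d n b $$ (q + d * x, a) = (if x = a div d then b n ((x + a mod d) mod d) q else 0)"
proof -
  assume q: "q < d" and x: "x < d" and a: "a < d * d"
  have "q + d * x < d * d"
  proof -
    have "q + d * x < d + d * x" using q by simp
    also have "d + d * x \<le> d * d" using x by (metis mult_Suc_right mult_le_mono2 Suc_leI)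
    finally show ?thesis .
  qed
  thus ?thesis using a q unfolding Vm_def by (simp add: divmod_dq[OF q])
qed

lemma V_unitary: "unitary (d*d) (Vm d n b)"
proof -
  let ?V = "Vm d n b"
  have VV: "adj ?V * ?V = 1\<^sub>m (d*d)"
  proof (rule eq_matI)
    fix a c assume "a < dim_row (1\<^sub>m (d*d))" "c < dim_col (1\<^sub>m (d*d))"
    hence a: "a < d*d" and c: "c < d*d" by auto
    have ad: "a div d < d" "a mod d < d" and cd: "c div d < d" "c mod d < d"
      using a c d0 by (auto simp: less_mult_imp_div_less)
    have "(adj ?V * ?V) $$ (a,c) = (\<Sum>i<d*d. cnj (?V $$ (i,a)) * ?V $$ (i,c))"
      using mult_entry[OF adj_carrier[OF Vc] Vc a c] a c Vc by simp
    also have "\<dots> = (\<Sum>x<d. \<Sum>q<d. cnj (?V $$ (q + d*x, a)) * ?V $$ (q + d*x, c))"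
      by (rule sum_split_dd[OF d0])
    also have "\<dots> = (\<Sum>x<d. if x = a div d \<and> x = c div d then
         (\<Sum>q<d. cnj (b n ((x + a mod d) mod d) q) * b n ((x + c mod d) mod d) q) else 0)"
      by (intro sum.cong refl, auto simp: V_entry a c)
    also have "\<dots> = (if a div d = c div d then
         (\<Sum>q<d. cnj (b n ((a div d + a mod d) mod d) q) * b n ((a div d + c mod d) mod d) q) else 0)"
      using ad by (cases "a div d = c div d", simp_all add: sum.delta, auto intro!: sum.neutral)
    also have "\<dots> = (if a = c then 1 else 0)"
    proof (cases "a div d = c div d")
      case True
      have "(\<Sum>q<d. cnj (b n ((a div d + a mod d) mod d) q) * b n ((a div d + c mod d) mod d) q) =
         (if a mod d = c mod d then 1 else 0)"
        using orth[of "(a div d + a mod d) mod d" "(a div d + c mod d) mod d"] d0 ad cd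
          mod_inj[of "a div d" d "a mod d" "c mod d"] by auto
      moreover have "(a = c) = (a mod d = c mod d)" using True
        by (metis div_mult_mod_eq)
      ultimately show ?thesis using True by simp
    next
      case False
      then show ?thesis by auto
    qed
    finally show "(adj ?V * ?V) $$ (a,c) = 1\<^sub>m (d*d) $$ (a,c)" using a c by simp
  qed (use Vc in auto)
  have VV2: "?V * adj ?V = 1\<^sub>m (d*d)"
    using mat_mult_left_right_inverse[OF adj_carrier[OF Vc] Vc VV] .
  show ?thesis unfolding unitary_def using Vc VV VV2 by auto
qed

lemma VRV:
  assumes R: "R \<in> carrier_mat (d*d) (d*d)"
    and RG: "\<And>i j. i < d*d \<Longrightarrow> j < d*d \<Longrightarrow>
       R $$ (i,j) = Gf (i div d) (j div d) * (b n (i div d) (i mod d) * cnj (b n (j div d) (j mod d)))"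
    and a: "a < d*d" and c: "c < d*d"
  shows "(adj (Vm d n b) * R * Vm d n b) $$ (a,c) =
     (if a mod d = 0 \<and> c mod d = 0 then Gf (a div d) (c div d) else 0)"
proof -
  let ?V = "Vm d n b"
  have ad: "a div d < d" "a mod d < d" and cd: "c div d < d" "c mod d < d"
    using a c d0 by (auto simp: less_mult_imp_div_less)
  have W1: "(adj ?V * R) $$ (a,j) = (if a mod d = 0 then Gf (a div d) (j div d) * cnj (b n (j div d) (j mod d)) else 0)"
    if j: "j < d*d" for j
  proof -
    have "(adj ?V * R) $$ (a,j) = (\<Sum>i<d*d. cnj (?V $$ (i,a)) * R $$ (i,j))"
      using mult_entry[OF adj_carrier[OF Vc] R a j] a Vc by simp
    also have "\<dots> = (\<Sum>x<d. \<Sum>q<d. cnj (?V $$ (q + d*x, a)) * R $$ (q + d*x, j))"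
      by (rule sum_split_dd[OF d0])
    also have "\<dots> = (\<Sum>x<d. if x = a div d then Gf x (j div d) * cnj (b n (j div d) (j mod d)) *
         (\<Sum>q<d. cnj (b n ((x + a mod d) mod d) q) * b n x q) else 0)"
    proof (intro sum.cong refl)
      fix x assume x: "x \<in> {..<d}"
      have "(\<Sum>q<d. cnj (?V $$ (q + d*x, a)) * R $$ (q + d*x, j)) =
        (\<Sum>q<d. if x = a div d then Gf x (j div d) * cnj (b n (j div d) (j mod d)) *
             (cnj (b n ((x + a mod d) mod d) q) * b n x q) else 0)"
      proof (intro sum.cong refl)
        fix q assume q: "q \<in> {..<d}"
        have lt: "q + d * x < d * d"
        proof -
          have "q + d * x < d + d * x" using q by simp
          also have "d + d * x \<le> d * d" using x by (metis lessThan_iff mult_Suc_right mult_le_mono2 Suc_leI)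
          finally show ?thesis .
        qed
        show "cnj (?V $$ (q + d*x, a)) * R $$ (q + d*x, j) = (if x = a div d then Gf x (j div d) * cnj (b n (j div d) (j mod d)) *
             (cnj (b n ((x + a mod d) mod d) q) * b n x q) else 0)"
          using V_entry[of q x a] RG[OF lt j] q x a divmod_dq[of q d x] by auto
      qed
      also have "\<dots> = (if x = a div d then Gf x (j div d) * cnj (b n (j div d) (j mod d)) *
         (\<Sum>q<d. cnj (b n ((x + a mod d) mod d) q) * b n x q) else 0)"
        by (auto simp: sum_distrib_left)
      finally show "(\<Sum>q<d. cnj (?V $$ (q + d*x, a)) * R $$ (q + d*x, j)) = \<dots>" .
    qed
    also have "\<dots> = Gf (a div d) (j div d) * cnj (b n (j div d) (j mod d)) *
         (\<Sum>q<d. cnj (b n ((a div d + a mod d) mod d) q) * b n (a div d) q)"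
      using ad by (simp add: sum.delta)
    also have "(\<Sum>q<d. cnj (b n ((a div d + a mod d) mod d) q) * b n (a div d) q) = (if a mod d = 0 then 1 else 0)"
      using orth[of "(a div d + a mod d) mod d" "a div d"] ad d0 mod_self[of "a div d" d "a mod d"] by auto
    finally show ?thesis by simp
  qed
  have "(adj ?V * R * ?V) $$ (a,c) = (\<Sum>j<d*d. (adj ?V * R) $$ (a,j) * ?V $$ (j,c))"
    using mult_entry[OF mult_carrier_mat[OF adj_carrier[OF Vc] R] Vc a c] by simp
  also have "\<dots> = (\<Sum>y<d. \<Sum>q<d. (adj ?V * R) $$ (a, q + d*y) * ?V $$ (q + d*y, c))"
    by (rule sum_split_dd[OF d0])
  also have "\<dots> = (\<Sum>y<d. if y = c div d then (if a mod d = 0 then Gf (a div d) y else 0) *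
       (\<Sum>q<d. cnj (b n y q) * b n ((y + c mod d) mod d) q) else 0)"
  proof (intro sum.cong refl)
    fix y assume y: "y \<in> {..<d}"
    have "(\<Sum>q<d. (adj ?V * R) $$ (a, q + d*y) * ?V $$ (q + d*y, c)) =
      (\<Sum>q<d. if y = c div d then (if a mod d = 0 then Gf (a div d) y else 0) *
        (cnj (b n y q) * b n ((y + c mod d) mod d) q) else 0)"
    proof (intro sum.cong refl)
      fix q assume q: "q \<in> {..<d}"
      have lt: "q + d * y < d * d"
      proof -
        have "q + d * y < d + d * y" using q by simp
        also have "d + d * y \<le> d * d" using y by (metis lessThan_iff mult_Suc_right mult_le_mono2 Suc_leI)
        finally show ?thesis .
      qed
      show "(adj ?V * R) $$ (a, q + d*y) * ?V $$ (q + d*y, c) = (if y = c div d then (if a mod d = 0 then Gf (a div d) y else 0) *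
        (cnj (b n y q) * b n ((y + c mod d) mod d) q) else 0)"
        using W1[OF lt] V_entry[of q y c] q y c divmod_dq[of q d y] by auto
    qed
    also have "\<dots> = (if y = c div d then (if a mod d = 0 then Gf (a div d) y else 0) *
       (\<Sum>q<d. cnj (b n y q) * b n ((y + c mod d) mod d) q) else 0)"
      by (auto simp: sum_distrib_left)
    finally show "(\<Sum>q<d. (adj ?V * R) $$ (a, q + d*y) * ?V $$ (q + d*y, c)) = \<dots>" .
  qed
  also have "\<dots> = (if a mod d = 0 then Gf (a div d) (c div d) else 0) *
       (\<Sum>q<d. cnj (b n (c div d) q) * b n ((c div d + c mod d) mod d) q)"
    using cd by (simp add: sum.delta)
  also have "(\<Sum>q<d. cnj (b n (c div d) q) * b n ((c div d + c mod d) mod d) q) = (if c mod d = 0 then 1 else 0)"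
    using orth[of "c div d" "(c div d + c mod d) mod d"] cd d0 mod_self[of "c div d" d "c mod d"] by auto
  finally show ?thesis by simp
qed

end


lemma conj_back:
  assumes uV: "unitary m V" and X: "X \<in> carrier_mat m m"
  shows "V * (adj V * X * V) * adj V = X"
proof -
  have V: "V \<in> carrier_mat m m" and VV: "V * adj V = 1\<^sub>m m" using uV unitary_def by auto
  have aV: "adj V \<in> carrier_mat m m" using V by simp
  have c1: "adj V * X \<in> carrier_mat m m" using aV X by simp
  have "V * (adj V * X * V) * adj V = V * (adj V * X * V * adj V)"
    using assoc_mult_mat[OF V mult_carrier_mat[OF c1 V] aV] .
  also have "adj V * X * V * adj V = adj V * X * (V * adj V)" using assoc_mult_mat[OF c1 V aV] .
  also have "\<dots> = adj V * X" using VV right_mult_one_mat[OF c1] by simp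
  also have "V * (adj V * X) = (V * adj V) * X" using assoc_mult_mat[OF V aV X] by simp
  also have "\<dots> = X" using VV X by simp
  finally show ?thesis .
qed

lemma conj_gram:
  assumes V: "V \<in> carrier_mat m m" and M: "M \<in> carrier_mat m k"
  shows "adj V * (M * adj M) * V = (adj V * M) * adj (adj V * M)"
proof -
  have aV: "adj V \<in> carrier_mat m m" using V by simp
  have aM: "adj M \<in> carrier_mat k m" using M by simp
  have "(adj V * M) * adj (adj V * M) = adj V * M * (adj M * V)" using adj_mult[OF aV M] by simp
  also have "\<dots> = adj V * (M * (adj M * V))" using assoc_mult_mat[OF aV M mult_carrier_mat[OF aM V]] .
  also have "M * (adj M * V) = M * adj M * V" using assoc_mult_mat[OF M aM V] by simp
  also have "adj V * (M * adj M * V) = adj V * (M * adj M) * V"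
    using assoc_mult_mat[OF aV mult_carrier_mat[OF M aM] V] by simp
  finally show ?thesis by simp
qed

context
  fixes d n :: nat and alpha :: "nat \<Rightarrow> complex" and b :: "nat \<Rightarrow> nat \<Rightarrow> nat \<Rightarrow> complex"
  assumes n1: "n \<ge> 1" and d2: "d \<ge> 2"
    and orth: "\<And>x y. x < d \<Longrightarrow> y < d \<Longrightarrow> (\<Sum>q<d. cnj (b n x q) * b n y q) = (if x = y then 1 else 0)"
begin

lemma key_ineq:
  "vn_entropy d (reduced_dm d (n+1) (unamp_state d n alpha b) [0, n])
     \<le> vn_entropy d (reduced_dm d (2*n+1) (amp_state d n alpha b) [0, 2*n])"
proof -
  have d0: "d > 0" using d2 by simp
  define R where "R = reduced_dm d (n+1) (unamp_state d n alpha b) [0, n]"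
  define Ra where "Ra = reduced_dm d (2*n+1) (amp_state d n alpha b) [0, 2*n]"
  define V where "V = Vm d n b"
  define Gf' where "Gf' x y = (if x = y then Gm d n alpha b x y else 0)" for x y
  have Rc: "R \<in> carrier_mat (d*d) (d*d)" unfolding R_def using reduced_dm_carrier[of d "n+1" _ "[0, n]"] by simp
  have Rac: "Ra \<in> carrier_mat (d*d) (d*d)" unfolding Ra_def using reduced_dm_carrier[of d "2*n+1" _ "[0, 2*n]"] by simp
  have uV: "unitary (d*d) V" unfolding V_def by (rule V_unitary[where d=d and n=n and b=b, OF d0 orth])
  have Vc: "V \<in> carrier_mat (d*d) (d*d)" using uV unitary_def by auto
  have RG: "R $$ (i,j) = Gm d n alpha b (i div d) (j div d) * (b n (i div d) (i mod d) * cnj (b n (j div d) (j mod d)))"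
    if "i < d*d" "j < d*d" for i j
    unfolding R_def by (rule E4[OF n1 d0 that])
  have RaG: "Ra $$ (i,j) = Gf' (i div d) (j div d) * (b n (i div d) (i mod d) * cnj (b n (j div d) (j mod d)))"
    if "i < d*d" "j < d*d" for i j
    unfolding Ra_def E3[OF n1 d0 that] E4[OF n1 d0 that] Gf'_def by simp
  define A where "A = adj V * R * V"
  define B where "B = adj V * Ra * V"
  have Ac: "A \<in> carrier_mat (d*d) (d*d)" unfolding A_def by (rule mult_carrier_mat[OF mult_carrier_mat[OF adj_carrier[OF Vc] Rc] Vc])
  have Bc: "B \<in> carrier_mat (d*d) (d*d)" unfolding B_def by (rule mult_carrier_mat[OF mult_carrier_mat[OF adj_carrier[OF Vc] Rac] Vc])
  have Aent: "A $$ (a,c) = (if a mod d = 0 \<and> c mod d = 0 then Gm d n alpha b (a div d) (c div d) else 0)"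
    if "a < d*d" "c < d*d" for a c
    unfolding A_def V_def by (rule VRV[where d=d and n=n and b=b, OF d0 orth _ RG that], use Rc in auto)
  have Bent: "B $$ (a,c) = (if a mod d = 0 \<and> c mod d = 0 then Gf' (a div d) (c div d) else 0)"
    if "a < d*d" "c < d*d" for a c
    unfolding B_def V_def by (rule VRV[where d=d and n=n and b=b, OF d0 orth _ RaG that], use Rac in auto)
  have dB: "diagonal_mat B" unfolding diagonal_mat_def
  proof (intro allI impI)
    fix a c assume a: "a < dim_row B" and c: "c < dim_col B" and ac: "a \<noteq> c"
    hence a': "a < d*d" and c': "c < d*d" using Bc by auto
    show "B $$ (a,c) = 0"
    proof (cases "a mod d = 0 \<and> c mod d = 0")
      case True
      have "a div d \<noteq> c div d"
      proof
        assume "a div d = c div d"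
        hence "a = c" using True by (metis div_mult_mod_eq)
        thus False using ac by simp
      qed
      then show ?thesis unfolding Bent[OF a' c'] Gf'_def by simp
    next
      case False then show ?thesis unfolding Bent[OF a' c'] by auto
    qed
  qed
  have BA: "\<forall>i<d*d. B $$ (i,i) = A $$ (i,i)"
    using Aent Bent unfolding Gf'_def by simp
  obtain k M where Mc: "M \<in> carrier_mat (d ^ length [0, n]) k" and RM: "R = M * adj M"
    using reduced_psd[of d "[0, n]" "n+1" "unamp_state d n alpha b"] unfolding R_def by blast
  have Mc': "M \<in> carrier_mat (d*d) k" using Mc by simp
  have AN: "A = (adj V * M) * adj (adj V * M)" unfolding A_def RM by (rule conj_gram[OF Vc Mc'])
  have Nc: "adj V * M \<in> carrier_mat (d*d) k" by (rule mult_carrier_mat[OF adj_carrier[OF Vc] Mc'])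
  have "vn_entropy d A \<le> vn_entropy d B" by (rule dephase[OF Ac Nc AN Bc dB BA d2])
  moreover have "R = V * A * adj V" unfolding A_def using conj_back[OF uV Rc] by simp
  hence "vn_entropy d R = vn_entropy d A" by (rule vn_entropy_unitary_sim[OF uV Ac])
  moreover have "Ra = V * B * adj V" unfolding B_def using conj_back[OF uV Rac] by simp
  hence "vn_entropy d Ra = vn_entropy d B" by (rule vn_entropy_unitary_sim[OF uV Bc])
  ultimately show ?thesis unfolding R_def Ra_def by simp
qed

end

lemma vn_entropy_small: "d \<le> 1 \<Longrightarrow> vn_entropy d X = 0"
proof -
  assume d: "d \<le> 1"
  have "ln (real d) = 0" using d by (cases d, auto)
  hence "\<And>t. entr (real d) t = 0" by (simp add: entr_def log_def)
  thus ?thesis unfolding vn_entropy_def by simp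
qed

theorem theorem4:
  fixes d n :: nat and alpha :: "nat \<Rightarrow> complex" and b :: "nat \<Rightarrow> nat \<Rightarrow> nat \<Rightarrow> complex"
  assumes "n \<ge> 1"
    and "\<And>i x y. i \<in> {1..n} \<Longrightarrow> x < d \<Longrightarrow> y < d \<Longrightarrow>
           (\<Sum>q<d. cnj (b i x q) * b i y q) = (if x = y then 1 else 0)"
    and "(\<Sum>x<d. (cmod (alpha x))\<^sup>2) = 1"
  shows "mutual_entropy d (2 * n + 1) (amp_state d n alpha b) [0] [2 * n]
           \<le> mutual_entropy d (n + 1) (unamp_state d n alpha b) [0] [n]"
proof (cases "d \<le> 1")
  case True
  then show ?thesis unfolding mutual_entropy_def by (simp add: vn_entropy_small)
next
  case False
  hence d2: "d \<ge> 2" by simp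
  have orth: "\<And>x y. x < d \<Longrightarrow> y < d \<Longrightarrow> (\<Sum>q<d. cnj (b n x q) * b n y q) = (if x = y then 1 else 0)"
    using assms(2)[of n] assms(1) by simp
  have d0: "d > 0" using d2 by simp
  have e1: "reduced_dm d (2*n+1) (amp_state d n alpha b) [0] = reduced_dm d (n+1) (unamp_state d n alpha b) [0]"
    by (rule E1[where d=d and n=n and alpha=alpha and b=b, OF assms(1) d0 orth])
  have e2: "reduced_dm d (2*n+1) (amp_state d n alpha b) [2*n] = reduced_dm d (n+1) (unamp_state d n alpha b) [n]"
    by (rule E2[where d=d and n=n and alpha=alpha and b=b, OF assms(1) d0 orth])
  have k: "vn_entropy d (reduced_dm d (n+1) (unamp_state d n alpha b) [0, n])
     \<le> vn_entropy d (reduced_dm d (2*n+1) (amp_state d n alpha b) [0, 2*n])"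
    by (rule key_ineq[where d=d and n=n and alpha=alpha and b=b, OF assms(1) d2 orth])
  show ?thesis unfolding mutual_entropy_def using e1 e2 k by simp
qed


end
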